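(* Let $\alpha>1$ and $\lambda>0$. Let $(N_x)_{x\in\mathbb Z}$ be independent Poisson random variables with intensity $\lambda$. Let $\{Y_i^{(x)}\}_{x\in\mathbb Z,\,i\in\mathbb N}$ be i.i.d. random variables, independent of $(N_x)$, with $$\mathbb P(Y_1^{(0)}=k)=\frac{|k|^{-(1+\alpha)}}{2\zeta(1+\alpha)}\quad\text{for } k\in\mathbb Z\setminus\{0\}.$$ Set $$S_n=\sum_{x=-n}^{n}\sum_{i=1}^{N_x}Y_i^{(x)}.$$ Then there exists $\beta=\beta_\alpha>0$ such that, for any $c>0$, uniformly in $k\ge cn$, $$\mathbb P(S_n=k)=\mathbb P\big(\exists\,x\in\{-n,\dots,n\}\text{ and } i\in\{1,\dots,N_x\}:\ Y_i^{(x)}=k\big)\,\big(1+O(n^{-\beta})\big)\quad\text{as } n\to\infty.$$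
   Context: $\zeta$ denotes the Riemann zeta function. *)

theory Defs
  imports "HOL-Probability.Probability"
begin

definition zeta_real :: "real \<Rightarrow> real" where
  "zeta_real s = (\<Sum>m. 1 / (real (Suc m)) powr s)"

end

theory Submission
  imports Defs
begin


lemma prob_pair_pmf_snd:
  "measure_pmf.prob (pair_pmf p q) S = measure_pmf.expectation q (\<lambda>g. measure_pmf.prob p {y. (y,g) \<in> S})"
proof -
  have "emeasure (measure_pmf (pair_pmf p q)) S = emeasure (measure_pmf (pair_pmf q p)) ((\<lambda>(x, y). (y, x)) -` S)"
    by (subst pair_commute_pmf) (simp add: map_pmf_rep_eq emeasure_distr)
  also have "\<dots> = (\<integral>\<^sup>+x. indicator ((\<lambda>(x, y). (y, x)) -` S) x \<partial>pair_pmf q p)"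
    by simp
  also have "\<dots> = (\<integral>\<^sup>+b. \<integral>\<^sup>+a. indicator S (a,b) \<partial>p \<partial>q)"
    by (subst nn_integral_pair_pmf') (auto intro!: nn_integral_cong simp: indicator_def)
  also have "\<dots> = (\<integral>\<^sup>+b. ennreal (measure_pmf.prob p {a. (a,b) \<in> S}) \<partial>q)"
  proof (intro nn_integral_cong)
    fix b
    have "(\<integral>\<^sup>+a. indicator S (a,b) \<partial>p) = (\<integral>\<^sup>+a. indicator {a. (a,b) \<in> S} a \<partial>p)"
      by (intro nn_integral_cong) (auto simp: indicator_def)
    also have "\<dots> = emeasure p {a. (a,b) \<in> S}"
      by (subst nn_integral_indicator) auto
    finally show "(\<integral>\<^sup>+a. indicator S (a,b) \<partial>p) = ennreal (measure_pmf.prob p {a. (a,b) \<in> S})"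
      by (simp add: measure_pmf.emeasure_eq_measure)
  qed
  also have "\<dots> = ennreal (measure_pmf.expectation q (\<lambda>g. measure_pmf.prob p {y. (y,g) \<in> S}))"
    by (intro nn_integral_eq_integral measure_pmf.integrable_const_bound[where B=1]) auto
  finally show ?thesis
    by (simp add: measure_pmf.emeasure_eq_measure)
qed

lemma expectation_pair_pmf_snd:
  fixes F :: "'a \<times> 'b \<Rightarrow> real"
  assumes "\<And>z. 0 \<le> F z" "\<And>z. F z \<le> B"
  shows "measure_pmf.expectation (pair_pmf p q) F = measure_pmf.expectation q (\<lambda>g. measure_pmf.expectation p (\<lambda>y. F (y,g)))"
proof -
  have int1: "integrable (measure_pmf r) G" if "\<And>z. 0 \<le> G z" "\<And>z. G z \<le> B" for r :: "'c pmf" and G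
    by (intro measure_pmf.integrable_const_bound[where B=B]) (use that in auto)
  have "ennreal (measure_pmf.expectation (pair_pmf p q) F) = (\<integral>\<^sup>+x. F x \<partial>pair_pmf p q)"
    by (intro nn_integral_eq_integral[symmetric] int1) (use assms in auto)
  also have "\<dots> = (\<integral>\<^sup>+x. F (case x of (x,y) \<Rightarrow> (y,x)) \<partial>pair_pmf q p)"
    by (subst pair_commute_pmf) (simp add: case_prod_unfold)
  also have "\<dots> = (\<integral>\<^sup>+b. \<integral>\<^sup>+a. F (a,b) \<partial>p \<partial>q)"
    by (subst nn_integral_pair_pmf') simp
  also have "\<dots> = (\<integral>\<^sup>+b. ennreal (measure_pmf.expectation p (\<lambda>y. F (y,b))) \<partial>q)"
    by (intro nn_integral_cong nn_integral_eq_integral int1) (use assms in auto)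
  also have "\<dots> = ennreal (measure_pmf.expectation q (\<lambda>g. measure_pmf.expectation p (\<lambda>y. F (y,g))))"
  proof (intro nn_integral_eq_integral int1 AE_I2)
    fix g show "0 \<le> measure_pmf.expectation p (\<lambda>y. F (y,g))"
      by (intro Bochner_Integration.integral_nonneg) (use assms in auto)
    show "measure_pmf.expectation p (\<lambda>y. F (y,g)) \<le> B"
      using measure_pmf.integral_le_const[of p "\<lambda>y. F (y,g)" B] int1[of "\<lambda>y. F (y,g)" p] assms by auto
  qed (auto intro!: Bochner_Integration.integral_nonneg simp: assms)
  finally show ?thesis
    by (subst (asm) ennreal_inj) (auto intro!: Bochner_Integration.integral_nonneg simp: assms)
qed

lemma Pi_pmf_insert_prob:
  assumes "finite A" "a \<notin> A"
  shows "measure_pmf.prob (Pi_pmf (insert a A) d q) S =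
         measure_pmf.expectation (Pi_pmf A d q) (\<lambda>g. measure_pmf.prob (q a) {y. g(a:=y) \<in> S})"
  using assms by (simp add: Pi_pmf_insert prob_pair_pmf_snd)

lemma Pi_pmf_insert_expectation:
  fixes F :: "_ \<Rightarrow> real"
  assumes "finite A" "a \<notin> A" "\<And>z. 0 \<le> F z" "\<And>z. F z \<le> B"
  shows "measure_pmf.expectation (Pi_pmf (insert a A) d q) F =
         measure_pmf.expectation (Pi_pmf A d q) (\<lambda>g. measure_pmf.expectation (q a) (\<lambda>y. F (g(a:=y))))"
  using assms by (simp add: Pi_pmf_insert case_prod_unfold expectation_pair_pmf_snd[where B=B])

lemma nn_integral_int_split:
  fixes f :: "int \<Rightarrow> ennreal"
  shows "(\<integral>\<^sup>+j. f j \<partial>count_space UNIV) = (\<Sum>n. f (int n)) + (\<Sum>n. f (- int (Suc n)))"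
proof -
  have "(\<integral>\<^sup>+j. f j \<partial>count_space UNIV) =
        (\<integral>\<^sup>+j. f j * indicator {0..} j + f j * indicator {..<0} j \<partial>count_space UNIV)"
    by (intro nn_integral_cong) (auto simp: indicator_def)
  also have "\<dots> = (\<integral>\<^sup>+j. f j * indicator {0..} j \<partial>count_space UNIV) + (\<integral>\<^sup>+j. f j * indicator {..<0} j \<partial>count_space UNIV)"
    by (rule nn_integral_add) auto
  also have "(\<integral>\<^sup>+j. f j * indicator {0..} j \<partial>count_space UNIV) = (\<integral>\<^sup>+j. f j \<partial>count_space {0..})"
    by (simp add: nn_integral_count_space_indicator)
  also have "\<dots> = (\<integral>\<^sup>+n. f (int n) \<partial>count_space UNIV)"
  proof (rule nn_integral_bij_count_space[symmetric])
    show "bij_betw int UNIV {0::int..}"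
      by (auto simp: bij_betw_def inj_on_def image_def intro!: exI[of _ "nat x" for x])
  qed
  also have "\<dots> = (\<Sum>n. f (int n))" by (rule nn_integral_count_space_nat)
  also have "(\<integral>\<^sup>+j. f j * indicator {..<0} j \<partial>count_space UNIV) = (\<integral>\<^sup>+j. f j \<partial>count_space {..<0})"
    by (simp add: nn_integral_count_space_indicator)
  also have "\<dots> = (\<integral>\<^sup>+n. f (- int (Suc n)) \<partial>count_space UNIV)"
  proof (rule nn_integral_bij_count_space[symmetric])
    show "bij_betw (\<lambda>n. - int (Suc n)) UNIV {..<0::int}"
      unfolding bij_betw_def inj_on_def image_def
      by (auto intro!: exI[of _ "nat (- x - 1)" for x])
  qed
  also have "\<dots> = (\<Sum>n. f (- int (Suc n)))" by (rule nn_integral_count_space_nat)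
  finally show ?thesis .
qed

section \<open>The heavy-tailed symmetric distribution\<close>

locale heavy =
  fixes p :: "int pmf" and \<alpha> Z :: real
  assumes alpha_gt: "1 < \<alpha>" and Z_pos: "0 < Z"
  and pmf_p: "\<And>j. pmf p j = (if j = 0 then 0 else \<bar>real_of_int j\<bar> powr (-(1+\<alpha>)) / (2*Z))"
begin

lemma pmf_sym: "pmf p (-j) = pmf p j"
  by (simp add: pmf_p)

lemma map_uminus: "map_pmf uminus p = p"
proof (rule pmf_eqI)
  fix j :: int
  have "pmf (map_pmf uminus p) j = pmf (map_pmf uminus p) (uminus (-j))" by simp
  also have "\<dots> = pmf p (-j)" by (rule pmf_map_inj') (auto simp: inj_def)
  finally show "pmf (map_pmf uminus p) j = pmf p j" by (simp add: pmf_sym)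
qed

lemma expectation_odd:
  fixes f :: "int \<Rightarrow> real"
  assumes "\<And>y. f (-y) = - f y"
  shows "measure_pmf.expectation p f = 0"
proof -
  have "measure_pmf.expectation p f = measure_pmf.expectation (map_pmf uminus p) f"
    by (simp add: map_uminus)
  also have "\<dots> = measure_pmf.expectation p (\<lambda>y. - f y)"
    by (simp add: assms)
  also have "\<dots> = - measure_pmf.expectation p f" by simp
  finally show ?thesis by simp
qed

lemma pmf_le_sup:
  assumes "0 < L" "L \<le> \<bar>real_of_int j\<bar>"
  shows "pmf p j \<le> L powr (-(1+\<alpha>)) / (2*Z)"
proof -
  have "j \<noteq> 0" using assms by auto
  moreover have "\<bar>real_of_int j\<bar> powr (-(1+\<alpha>)) \<le> L powr (-(1+\<alpha>))"
    using assms alpha_gt by (intro powr_mono2') auto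
  ultimately show ?thesis using Z_pos by (simp add: pmf_p divide_right_mono)
qed

lemma moment_integrable:
  assumes "0 \<le> \<gamma>" "\<gamma> < \<alpha>"
  shows "integrable (measure_pmf p) (\<lambda>j. \<bar>real_of_int j\<bar> powr \<gamma>)"
proof (rule integrableI_bounded)
  define g where "g = (\<lambda>n::nat. real n powr (\<gamma> - 1 - \<alpha>) / (2*Z))"
  have sg: "summable g"
    unfolding g_def using assms by (intro summable_divide) (simp add: summable_real_powr_iff)
  have g0: "0 \<le> g n" for n using Z_pos by (simp add: g_def)
  have sg': "summable (\<lambda>n. g (Suc n))" using sg by (subst summable_Suc_iff)
  have eq1: "ennreal (pmf p (int n)) * ennreal (\<bar>real_of_int (int n)\<bar> powr \<gamma>) = ennreal (g n)" for n
  proof (cases "n = 0")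
    case False
    have e: "\<gamma> - 1 - \<alpha> = -(1+\<alpha>) + \<gamma>" by simp
    have "real n powr (-(1+\<alpha>)) * real n powr \<gamma> = real n powr (\<gamma> - 1 - \<alpha>)"
      unfolding e by (simp add: powr_add)
    then show ?thesis using False Z_pos
      by (simp add: pmf_p g_def ennreal_mult'[symmetric] ennreal_mult[symmetric])
  qed (simp add: pmf_p g_def)
  have eq2: "ennreal (pmf p (- int (Suc n))) * ennreal (\<bar>real_of_int (- int (Suc n))\<bar> powr \<gamma>) = ennreal (g (Suc n))" for n
  proof -
    have e: "\<gamma> - 1 - \<alpha> = -(1+\<alpha>) + \<gamma>" by simp
    have "real (Suc n) powr (-(1+\<alpha>)) * real (Suc n) powr \<gamma> = real (Suc n) powr (\<gamma> - 1 - \<alpha>)"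
      unfolding e by (simp add: powr_add)
    then show ?thesis using Z_pos
      by (simp add: pmf_p g_def ennreal_mult'[symmetric] ennreal_mult[symmetric] del: of_nat_Suc)
  qed
  have "(\<integral>\<^sup>+ x. ennreal (norm (\<bar>real_of_int x\<bar> powr \<gamma>)) \<partial>measure_pmf p)
      = (\<integral>\<^sup>+ x. ennreal (pmf p x) * ennreal (\<bar>real_of_int x\<bar> powr \<gamma>) \<partial>count_space UNIV)"
    by (simp add: nn_integral_measure_pmf)
  also have "\<dots> = (\<Sum>n. ennreal (g n)) + (\<Sum>n. ennreal (g (Suc n)))"
    by (simp only: nn_integral_int_split eq1 eq2)
  also have "\<dots> = ennreal (suminf g) + ennreal (\<Sum>n. g (Suc n))"
    using sg sg' g0 by (simp add: suminf_ennreal2)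
  also have "\<dots> < \<infinity>" by (simp add: ennreal_plus[symmetric] del: ennreal_plus)
  finally show "(\<integral>\<^sup>+ x. ennreal (norm (\<bar>real_of_int x\<bar> powr \<gamma>)) \<partial>measure_pmf p) < \<infinity>" .
qed simp

definition tl :: "real \<Rightarrow> real" where
  "tl L = measure_pmf.prob p {y. L < \<bar>real_of_int y\<bar>}"

definition trr :: "real \<Rightarrow> int \<Rightarrow> real" where
  "trr L y = (if \<bar>real_of_int y\<bar> \<le> L then real_of_int y else 0)"

definition sig2 :: "real \<Rightarrow> real" where
  "sig2 L = measure_pmf.expectation p (\<lambda>y. (trr L y)^2)"

definition mom :: "real \<Rightarrow> real" where
  "mom \<gamma> = measure_pmf.expectation p (\<lambda>j. \<bar>real_of_int j\<bar> powr \<gamma>)"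

lemma mom_nonneg: "0 \<le> mom \<gamma>"
  unfolding mom_def by (intro Bochner_Integration.integral_nonneg) auto

lemma tl_nonneg: "0 \<le> tl L" by (simp add: tl_def)

lemma trr_bound: "\<bar>trr L y\<bar> \<le> max 0 L"
  by (auto simp: trr_def)

lemma trr_odd: "trr L (-y) = - trr L y"
  by (simp add: trr_def)

lemma tl_markov:
  assumes "0 < L" "0 \<le> \<gamma>" "\<gamma> < \<alpha>"
  shows "tl L \<le> mom \<gamma> / L powr \<gamma>"
proof -
  have int: "integrable (measure_pmf p) (\<lambda>j. \<bar>real_of_int j\<bar> powr \<gamma> / L powr \<gamma>)"
    using moment_integrable[OF assms(2,3)] by simp
  have "tl L = measure_pmf.expectation p (indicator {y. L < \<bar>real_of_int y\<bar>})"
    by (simp add: tl_def)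
  also have "\<dots> \<le> measure_pmf.expectation p (\<lambda>j. \<bar>real_of_int j\<bar> powr \<gamma> / L powr \<gamma>)"
  proof (intro Bochner_Integration.integral_mono int)
    show "integrable (measure_pmf p) (indicator {y. L < \<bar>real_of_int y\<bar>} :: int \<Rightarrow> real)"
      by (intro measure_pmf.integrable_const_bound[where B=1]) auto
    fix j :: int
    show "indicator {y. L < \<bar>real_of_int y\<bar>} j \<le> \<bar>real_of_int j\<bar> powr \<gamma> / L powr \<gamma>"
    proof (cases "L < \<bar>real_of_int j\<bar>")
      case True
      then have "L powr \<gamma> \<le> \<bar>real_of_int j\<bar> powr \<gamma>" using assms by (intro powr_mono2) auto
      then show ?thesis using True assms by (simp add: indicator_def)
    qed (simp add: indicator_def)
  qed
  also have "\<dots> = mom \<gamma> / L powr \<gamma>" by (simp add: mom_def)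
  finally show ?thesis .
qed

lemma sig2_bound:
  assumes "0 < L" "0 \<le> \<theta>" "\<theta> \<le> 1" "1 + \<theta> < \<alpha>"
  shows "sig2 L \<le> L powr (1 - \<theta>) * mom (1 + \<theta>)"
proof -
  have int: "integrable (measure_pmf p) (\<lambda>j. L powr (1 - \<theta>) * \<bar>real_of_int j\<bar> powr (1+\<theta>))"
    using moment_integrable[of "1+\<theta>"] assms by simp
  have "sig2 L \<le> measure_pmf.expectation p (\<lambda>j. L powr (1 - \<theta>) * \<bar>real_of_int j\<bar> powr (1+\<theta>))"
    unfolding sig2_def
  proof (intro Bochner_Integration.integral_mono int)
    show "integrable (measure_pmf p) (\<lambda>y. (trr L y)\<^sup>2)"
    proof (intro measure_pmf.integrable_const_bound[where B="L^2"] AE_I2)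
      fix x have "\<bar>trr L x\<bar> \<le> L" using trr_bound[of L x] assms by simp
      then show "norm ((trr L x)\<^sup>2) \<le> L^2" using assms abs_le_square_iff[of "trr L x" L] by simp
    qed simp
    fix j :: int
    show "(trr L j)\<^sup>2 \<le> L powr (1 - \<theta>) * \<bar>real_of_int j\<bar> powr (1 + \<theta>)"
    proof (cases "\<bar>real_of_int j\<bar> \<le> L \<and> j \<noteq> 0")
      case True
      let ?x = "\<bar>real_of_int j\<bar>"
      have xpos: "0 < ?x" using True by auto
      have "(trr L j)\<^sup>2 = ?x powr 2" using True xpos by (simp add: trr_def powr_numeral)
      also have "\<dots> = ?x powr (1 - \<theta>) * ?x powr (1 + \<theta>)" using xpos by (simp add: powr_add[symmetric])
      also have "\<dots> \<le> L powr (1 - \<theta>) * ?x powr (1 + \<theta>)"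
        using True assms by (intro mult_right_mono powr_mono2) auto
      finally show ?thesis .
    qed (auto simp: trr_def)
  qed
  also have "\<dots> = L powr (1 - \<theta>) * mom (1 + \<theta>)" by (simp add: mom_def)
  finally show ?thesis .
qed

lemma expectation_trr: "measure_pmf.expectation p (trr L) = 0"
  by (rule expectation_odd) (simp add: trr_odd)


end




context heavy
begin

lemma sum_upd_insert:
  fixes F :: "'b \<Rightarrow> 'c::comm_monoid_add"
  assumes "finite A" "a \<notin> A"
  shows "(\<Sum>b\<in>insert a A. F ((g(a:=y)) b)) = F y + (\<Sum>b\<in>A. F (g b))"
proof -
  have "(\<Sum>b\<in>A. F ((g(a:=y)) b)) = (\<Sum>b\<in>A. F (g b))"
    by (rule sum.cong) (use assms in auto)
  then show ?thesis using assms by simp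
qed

definition PP :: "'i set \<Rightarrow> ('i \<Rightarrow> int) pmf" where
  "PP A = Pi_pmf A 0 (\<lambda>_. p)"

lemma PP_component:
  assumes "finite A" "a \<in> A"
  shows "measure_pmf.prob (PP A) {f. f a \<in> B} = measure_pmf.prob p B"
proof -
  have "measure_pmf.prob (PP A) {f. f a \<in> B} = measure_pmf.prob (map_pmf (\<lambda>f. f a) (PP A)) B"
    by (simp add: vimage_def)
  also have "map_pmf (\<lambda>f. f a) (PP A) = p"
    using assms by (simp add: PP_def Pi_pmf_component)
  finally show ?thesis .
qed

lemma trr_sum_bound:
  "\<bar>\<Sum>a\<in>A. trr L (f a)\<bar> \<le> real (card A) * max 0 L"
proof -
  have "\<bar>\<Sum>a\<in>A. trr L (f a)\<bar> \<le> (\<Sum>a\<in>A. \<bar>trr L (f a)\<bar>)" by (rule sum_abs)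
  also have "\<dots> \<le> (\<Sum>a\<in>A. max 0 L)" by (intro sum_mono trr_bound)
  also have "\<dots> = real (card A) * max 0 L" by simp
  finally show ?thesis .
qed

lemma PP_exp:
  assumes "finite A"
  shows "measure_pmf.expectation (PP A) (\<lambda>f. exp (h * (\<Sum>a\<in>A. trr L (f a)))) =
         (measure_pmf.expectation p (\<lambda>y. exp (h * trr L y))) ^ card A"
proof -
  have "measure_pmf.expectation (PP A) (\<lambda>f. exp (h * (\<Sum>a\<in>A. trr L (f a)))) =
        measure_pmf.expectation (PP A) (\<lambda>f. \<Prod>a\<in>A. exp (h * trr L (f a)))"
    by (simp add: sum_distrib_left exp_sum assms)
  also have "\<dots> = (\<Prod>a\<in>A. measure_pmf.expectation p (\<lambda>y. exp (h * trr L y)))"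
    unfolding PP_def
  proof (rule expectation_prod_Pi_pmf[OF assms])
    fix x assume "x \<in> A"
    show "integrable (measure_pmf p) (\<lambda>y. exp (h * trr L y))"
    proof (intro measure_pmf.integrable_const_bound[where B="exp (\<bar>h\<bar> * max 0 L)"] AE_I2)
      fix y
      have "h * trr L y \<le> \<bar>h * trr L y\<bar>" by simp
      also have "\<dots> = \<bar>h\<bar> * \<bar>trr L y\<bar>" by (simp add: abs_mult)
      also have "\<dots> \<le> \<bar>h\<bar> * max 0 L" by (intro mult_left_mono trr_bound) auto
      finally have "h * trr L y \<le> \<bar>h\<bar> * max 0 L" .
      then show "norm (exp (h * trr L y)) \<le> exp (\<bar>h\<bar> * max 0 L)" by simp
    qed simp
  qed simp
  also have "\<dots> = (measure_pmf.expectation p (\<lambda>y. exp (h * trr L y))) ^ card A" by simp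
  finally show ?thesis .
qed

lemma PP_chernoff:
  assumes "finite A" "0 \<le> h"
  shows "measure_pmf.prob (PP A) {f. (\<Sum>a\<in>A. f a) = k \<and> (\<forall>a\<in>A. \<bar>real_of_int (f a)\<bar> \<le> L)} \<le>
         exp (- h * real_of_int k) * (measure_pmf.expectation p (\<lambda>y. exp (h * trr L y))) ^ card A"
proof -
  let ?S = "{f. (\<Sum>a\<in>A. f a) = k \<and> (\<forall>a\<in>A. \<bar>real_of_int (f a)\<bar> \<le> L)}"
  let ?G = "\<lambda>f. exp (- h * real_of_int k) * exp (h * (\<Sum>a\<in>A. trr L (f a)))"
  have intG: "integrable (measure_pmf (PP A)) ?G"
  proof (intro measure_pmf.integrable_const_bound[where B="exp (- h * real_of_int k) * exp (h * (real (card A) * max 0 L))"] AE_I2)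
    fix f
    have "h * (\<Sum>a\<in>A. trr L (f a)) \<le> h * (real (card A) * max 0 L)"
      using trr_sum_bound[where A=A and L=L and f=f] assms by (intro mult_left_mono) auto
    then show "norm (?G f) \<le> exp (- h * real_of_int k) * exp (h * (real (card A) * max 0 L))"
      by simp
  qed simp
  have "measure_pmf.prob (PP A) ?S = measure_pmf.expectation (PP A) (indicator ?S)" by simp
  also have "\<dots> \<le> measure_pmf.expectation (PP A) ?G"
  proof (intro Bochner_Integration.integral_mono intG)
    show "integrable (measure_pmf (PP A)) (indicator ?S :: _ \<Rightarrow> real)"
      by (intro measure_pmf.integrable_const_bound[where B=1]) auto
    fix f
    show "indicator ?S f \<le> ?G f"
    proof (cases "f \<in> ?S")
      case True
      then have "(\<Sum>a\<in>A. trr L (f a)) = real_of_int k"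
        by (auto simp: trr_def intro!: sum.cong)
      then show ?thesis using True by (simp add: exp_add[symmetric])
    qed simp
  qed
  also have "\<dots> = exp (- h * real_of_int k) * measure_pmf.expectation (PP A) (\<lambda>f. exp (h * (\<Sum>a\<in>A. trr L (f a))))"
    by simp
  also have "\<dots> = exp (- h * real_of_int k) * (measure_pmf.expectation p (\<lambda>y. exp (h * trr L y))) ^ card A"
    by (simp add: PP_exp assms)
  finally show ?thesis .
qed

lemma PP_second_moment:
  assumes "finite A"
  shows "measure_pmf.expectation (PP A) (\<lambda>f. (\<Sum>a\<in>A. trr L (f a))^2) = real (card A) * sig2 L"
  using assms
proof (induction rule: finite_induct)
  case empty
  then show ?case by (simp add: PP_def)
next
  case (insert a A)
  define B where "B = (real (card (insert a A)) * max 0 L)^2"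
  have bnd: "(\<Sum>b\<in>C. trr L (f b))^2 \<le> (real (card C) * max 0 L)^2" for C and f :: "'i \<Rightarrow> int"
    using trr_sum_bound[where A=C and L=L and f=f] by (simp add: abs_le_square_iff[symmetric])
  have intT: "integrable (measure_pmf q) (\<lambda>f. (\<Sum>b\<in>C. trr L (f b))^2)" for q :: "('i \<Rightarrow> int) pmf" and C
    by (intro measure_pmf.integrable_const_bound[where B="(real (card C) * max 0 L)^2"] AE_I2) (use bnd in auto)
  have int_trr2: "integrable (measure_pmf p) (\<lambda>y. (trr L y)^2)"
    by (intro measure_pmf.integrable_const_bound[where B="(max 0 L)^2"] AE_I2)
       (use trr_bound[of L] in \<open>auto simp: abs_le_square_iff[symmetric]\<close>)
  have int_trr: "integrable (measure_pmf p) (trr L)"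
    by (intro measure_pmf.integrable_const_bound[where B="max 0 L"] AE_I2) (use trr_bound[of L] in auto)
  have "measure_pmf.expectation (PP (insert a A)) (\<lambda>f. (\<Sum>b\<in>insert a A. trr L (f b))^2) =
        measure_pmf.expectation (PP A) (\<lambda>g. measure_pmf.expectation p (\<lambda>y. (\<Sum>b\<in>insert a A. trr L ((g(a:=y)) b))^2))"
    unfolding PP_def
  proof (rule Pi_pmf_insert_expectation[where B=B, OF insert(1) insert(2)])
    fix z :: "'a \<Rightarrow> int"
    show "(\<Sum>b\<in>insert a A. trr L (z b))^2 \<le> B" unfolding B_def by (rule bnd)
  qed simp
  also have "\<dots> = measure_pmf.expectation (PP A) (\<lambda>g. sig2 L + (\<Sum>b\<in>A. trr L (g b))^2)"
  proof (intro Bochner_Integration.integral_cong refl)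
    fix g
    let ?c = "(\<Sum>b\<in>A. trr L (g b))"
    have "(\<Sum>b\<in>insert a A. trr L ((g(a:=y)) b)) = trr L y + ?c" for y
      by (rule sum_upd_insert[OF insert(1,2)])
    then have "measure_pmf.expectation p (\<lambda>y. (\<Sum>b\<in>insert a A. trr L ((g(a:=y)) b))^2) =
               measure_pmf.expectation p (\<lambda>y. (trr L y)^2 + 2 * ?c * trr L y + ?c^2)"
      by (simp add: power2_sum algebra_simps)
    also have "\<dots> = sig2 L + 2 * ?c * measure_pmf.expectation p (trr L) + ?c^2"
      using int_trr int_trr2 by (simp add: sig2_def)
    also have "\<dots> = sig2 L + ?c^2" by (simp add: expectation_trr)
    finally show "measure_pmf.expectation p (\<lambda>y. (\<Sum>b\<in>insert a A. trr L ((g(a:=y)) b))^2) = sig2 L + ?c^2" .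
  qed
  also have "\<dots> = sig2 L + measure_pmf.expectation (PP A) (\<lambda>g. (\<Sum>b\<in>A. trr L (g b))^2)"
    by (subst Bochner_Integration.integral_add) (auto intro: intT)
  also have "\<dots> = sig2 L + real (card A) * sig2 L"
    using insert by simp
  also have "\<dots> = real (card (insert a A)) * sig2 L"
    using insert by (simp add: algebra_simps)
  finally show ?case .
qed

lemma sig2_nonneg: "0 \<le> sig2 L"
  unfolding sig2_def by (intro Bochner_Integration.integral_nonneg) auto

lemma PP_abs_mean:
  assumes "finite A" "0 < s"
  shows "measure_pmf.expectation (PP A) (\<lambda>f. \<bar>\<Sum>a\<in>A. trr L (f a)\<bar>) \<le> (real (card A) * sig2 L / s + s) / 2"
proof -
  have int2: "integrable (measure_pmf (PP A)) (\<lambda>f. (\<Sum>a\<in>A. trr L (f a))^2)"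
    by (intro measure_pmf.integrable_const_bound[where B="(real (card A) * max 0 L)^2"] AE_I2)
       (use trr_sum_bound[where A=A and L=L] in \<open>auto simp: abs_le_square_iff[symmetric]\<close>)
  have int1: "integrable (measure_pmf (PP A)) (\<lambda>f. \<bar>\<Sum>a\<in>A. trr L (f a)\<bar>)"
    by (intro measure_pmf.integrable_const_bound[where B="real (card A) * max 0 L"] AE_I2)
       (use trr_sum_bound[where A=A and L=L] in auto)
  have pw: "\<bar>x\<bar> \<le> (x^2 / s + s) / 2" for x :: real
  proof -
    have "0 \<le> (\<bar>x\<bar> - s)^2" by simp
    then have "2 * \<bar>x\<bar> * s \<le> x^2 + s^2" by (simp add: power2_diff algebra_simps)
    then show ?thesis using assms by (simp add: field_simps power2_eq_square)
  qed
  have "measure_pmf.expectation (PP A) (\<lambda>f. \<bar>\<Sum>a\<in>A. trr L (f a)\<bar>) \<le>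
        measure_pmf.expectation (PP A) (\<lambda>f. ((\<Sum>a\<in>A. trr L (f a))^2 / s + s) / 2)"
    by (intro Bochner_Integration.integral_mono int1 pw) (use int2 in auto)
  also have "\<dots> = (measure_pmf.expectation (PP A) (\<lambda>f. (\<Sum>a\<in>A. trr L (f a))^2) / s + s) / 2"
    using int2 by simp
  also have "\<dots> = (real (card A) * sig2 L / s + s) / 2"
    using assms by (simp add: PP_second_moment)
  finally show ?thesis .
qed

lemma PP_count_big:
  assumes "finite A"
  shows "measure_pmf.expectation (PP A) (\<lambda>f. \<Sum>a\<in>A. indicator {y. L < \<bar>real_of_int y\<bar>} (f a)) = real (card A) * tl L"
proof -
  have "measure_pmf.expectation (PP A) (\<lambda>f. \<Sum>a\<in>A. indicator {y. L < \<bar>real_of_int y\<bar>} (f a) :: real) =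
        (\<Sum>a\<in>A. measure_pmf.expectation (PP A) (\<lambda>f. indicator {y. L < \<bar>real_of_int y\<bar>} (f a)))"
    by (intro Bochner_Integration.integral_sum measure_pmf.integrable_const_bound[where B=1] AE_I2) auto
  also have "\<dots> = (\<Sum>a\<in>A. tl L)"
  proof (intro sum.cong refl)
    fix a assume a: "a \<in> A"
    have "measure_pmf.expectation (PP A) (\<lambda>f. indicator {y. L < \<bar>real_of_int y\<bar>} (f a) :: real) =
          measure_pmf.expectation (PP A) (indicator {f. f a \<in> {y. L < \<bar>real_of_int y\<bar>}})"
      by (intro Bochner_Integration.integral_cong) (auto simp: indicator_def)
    also have "\<dots> = measure_pmf.prob (PP A) {f. f a \<in> {y. L < \<bar>real_of_int y\<bar>}}"
      by simp
    also have "\<dots> = tl L" using PP_component[OF assms a, of "{y. L < \<bar>real_of_int y\<bar>}"] by (simp add: tl_def)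
    finally show "measure_pmf.expectation (PP A) (\<lambda>f. indicator {y. L < \<bar>real_of_int y\<bar>} (f a) :: real) = tl L" .
  qed
  finally show ?thesis by simp
qed

definition hfun :: "int \<Rightarrow> real \<Rightarrow> int \<Rightarrow> real" where
  "hfun k L r = (if L < \<bar>real_of_int (k - r)\<bar> then pmf p (k - r) else 0)"

lemma PP_one_big:
  assumes "finite A" "a \<notin> A"
  shows "measure_pmf.prob (PP (insert a A)) {f. (\<Sum>b\<in>insert a A. f b) = k \<and> L < \<bar>real_of_int (f a)\<bar>} =
         measure_pmf.expectation (PP A) (\<lambda>g. hfun k L (\<Sum>b\<in>A. g b))"
proof -
  have "measure_pmf.prob (PP (insert a A)) {f. (\<Sum>b\<in>insert a A. f b) = k \<and> L < \<bar>real_of_int (f a)\<bar>} =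
        measure_pmf.expectation (PP A) (\<lambda>g. measure_pmf.prob p {y. g(a:=y) \<in> {f. (\<Sum>b\<in>insert a A. f b) = k \<and> L < \<bar>real_of_int (f a)\<bar>}})"
    unfolding PP_def by (rule Pi_pmf_insert_prob[OF assms])
  also have "\<dots> = measure_pmf.expectation (PP A) (\<lambda>g. hfun k L (\<Sum>b\<in>A. g b))"
  proof (intro Bochner_Integration.integral_cong refl)
    fix g :: "'a \<Rightarrow> int"
    have "(\<Sum>b\<in>insert a A. (g(a:=y)) b) = y + (\<Sum>b\<in>A. g b)" for y
      using sum_upd_insert[OF assms, of "\<lambda>x. x"] by simp
    then have "{y. g(a:=y) \<in> {f. (\<Sum>b\<in>insert a A. f b) = k \<and> L < \<bar>real_of_int (f a)\<bar>}} =
               (if L < \<bar>real_of_int (k - (\<Sum>b\<in>A. g b))\<bar> then {k - (\<Sum>b\<in>A. g b)} else {})"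
      by auto
    then show "measure_pmf.prob p {y. g(a:=y) \<in> {f. (\<Sum>b\<in>insert a A. f b) = k \<and> L < \<bar>real_of_int (f a)\<bar>}} =
               hfun k L (\<Sum>b\<in>A. g b)"
      by (simp add: hfun_def measure_pmf_single)
  qed
  finally show ?thesis .
qed

definition supb :: "real \<Rightarrow> real" where
  "supb L = L powr (-(1+\<alpha>)) / (2*Z)"

lemma PP_two_big:
  assumes "finite A" "b \<notin> A" "a \<in> A" "0 < L"
  shows "measure_pmf.prob (PP (insert b A)) {f. (\<Sum>c\<in>insert b A. f c) = k \<and> L < \<bar>real_of_int (f a)\<bar> \<and> L < \<bar>real_of_int (f b)\<bar>}
         \<le> supb L * tl L"
proof -
  let ?S = "{f. (\<Sum>c\<in>insert b A. f c) = k \<and> L < \<bar>real_of_int (f a)\<bar> \<and> L < \<bar>real_of_int (f b)\<bar>}"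
  have ab: "a \<noteq> b" using assms by auto
  have "measure_pmf.prob (PP (insert b A)) ?S =
        measure_pmf.expectation (PP A) (\<lambda>g. measure_pmf.prob p {y. g(b:=y) \<in> ?S})"
    unfolding PP_def by (rule Pi_pmf_insert_prob[OF assms(1,2)])
  also have "\<dots> \<le> measure_pmf.expectation (PP A) (\<lambda>g. supb L * indicator {y. L < \<bar>real_of_int y\<bar>} (g a))"
  proof (intro Bochner_Integration.integral_mono)
    show "integrable (measure_pmf (PP A)) (\<lambda>g. measure_pmf.prob p {y. g(b:=y) \<in> ?S})"
      by (intro measure_pmf.integrable_const_bound[where B=1] AE_I2) auto
    show "integrable (measure_pmf (PP A)) (\<lambda>g. supb L * indicator {y. L < \<bar>real_of_int y\<bar>} (g a))"
      by (intro measure_pmf.integrable_const_bound[where B="\<bar>supb L\<bar>"] AE_I2) (auto simp: indicator_def)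
    fix g :: "'a \<Rightarrow> int"
    have sumeq: "(\<Sum>c\<in>insert b A. (g(b:=y)) c) = y + (\<Sum>c\<in>A. g c)" for y
      using sum_upd_insert[OF assms(1,2), of "\<lambda>x. x"] by simp
    show "measure_pmf.prob p {y. g(b:=y) \<in> ?S} \<le> supb L * indicator {y. L < \<bar>real_of_int y\<bar>} (g a)"
    proof (cases "L < \<bar>real_of_int (g a)\<bar> \<and> L < \<bar>real_of_int (k - (\<Sum>c\<in>A. g c))\<bar>")
      case True
      then have "{y. g(b:=y) \<in> ?S} = {k - (\<Sum>c\<in>A. g c)}"
        using ab sumeq by auto
      then have "measure_pmf.prob p {y. g(b:=y) \<in> ?S} = pmf p (k - (\<Sum>c\<in>A. g c))"
        by (simp add: measure_pmf_single)
      also have "\<dots> \<le> supb L" unfolding supb_def using True assms by (intro pmf_le_sup) auto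
      finally show ?thesis using True by simp
    next
      case False
      then have "{y. g(b:=y) \<in> ?S} = {}" using ab sumeq by auto
      then have "measure_pmf.prob p {y. g(b:=y) \<in> ?S} = 0" by (simp only: measure_empty)
      moreover have "0 \<le> supb L * indicator {y. L < \<bar>real_of_int y\<bar>} (g a)"
        using Z_pos by (simp add: supb_def)
      ultimately show ?thesis by linarith
    qed
  qed
  also have "\<dots> = supb L * measure_pmf.expectation (PP A) (indicator {g. g a \<in> {y. L < \<bar>real_of_int y\<bar>}})"
  proof -
    have "measure_pmf.expectation (PP A) (\<lambda>g. supb L * indicator {y. L < \<bar>real_of_int y\<bar>} (g a)) =
          measure_pmf.expectation (PP A) (\<lambda>g. supb L * indicator {g. g a \<in> {y. L < \<bar>real_of_int y\<bar>}} g)"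
      by (intro Bochner_Integration.integral_cong) (auto simp: indicator_def)
    then show ?thesis by simp
  qed
  also have "\<dots> = supb L * measure_pmf.prob (PP A) {g. g a \<in> {y. L < \<bar>real_of_int y\<bar>}}"
    by simp
  also have "\<dots> = supb L * tl L" using PP_component[OF assms(1,3), of "{y. L < \<bar>real_of_int y\<bar>}"] by (simp add: tl_def)
  finally show ?thesis .
qed

lemma PP_exists:
  assumes "finite A"
  shows "measure_pmf.prob (PP A) {f. \<exists>a\<in>A. f a = k} = 1 - (1 - pmf p k) ^ card A"
proof -
  have "{f. \<exists>a\<in>A. f a = k} = UNIV - {f. \<forall>a\<in>A. f a \<in> UNIV - {k}}" by auto
  then have "measure_pmf.prob (PP A) {f. \<exists>a\<in>A. f a = k} = 1 - measure_pmf.prob (PP A) {f. \<forall>a\<in>A. f a \<in> UNIV - {k}}"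
    using measure_pmf.prob_compl[where M="PP A" and A="{f. \<forall>a\<in>A. f a \<in> UNIV - {k}}"] by simp
  also have "{f. \<forall>a\<in>A. f a \<in> UNIV - {k}} = Pi A (\<lambda>_. UNIV - {k})" by (auto simp: Pi_def)
  also have "measure_pmf.prob (PP A) (Pi A (\<lambda>_. UNIV - {k})) = (\<Prod>a\<in>A. measure_pmf.prob p (UNIV - {k}))"
    unfolding PP_def by (rule measure_Pi_pmf_Pi[OF assms])
  also have "\<dots> = (1 - pmf p k) ^ card A"
    using measure_pmf.prob_compl[where M=p and A="{k}"] by (simp add: measure_pmf_single)
  finally show ?thesis .
qed

end




lemma powr_diff_bound:
  fixes a x y s :: real
  assumes "0 < a" "a \<le> x" "a \<le> y" "0 < s"
  shows "\<bar>x powr (-s) - y powr (-s)\<bar> \<le> s * a powr (-s-1) * \<bar>x - y\<bar>"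
proof -
  have main: "\<bar>u powr (-s) - v powr (-s)\<bar> \<le> s * a powr (-s-1) * \<bar>u - v\<bar>" if "a \<le> u" "u < v" for u v
  proof -
    have "\<exists>z. u < z \<and> z < v \<and> v powr (-s) - u powr (-s) = (v - u) * ((-s) * z powr (-s - 1))"
    proof (rule MVT2[OF \<open>u < v\<close>])
      fix x assume "u \<le> x" "x \<le> v"
      then have "0 < x" using that assms by auto
      then show "DERIV (\<lambda>z. z powr (-s)) x :> (-s) * x powr (-s - 1)"
        by (rule has_real_derivative_powr)
    qed
    then obtain z where z: "u < z" "z < v" "v powr (-s) - u powr (-s) = (v - u) * ((-s) * z powr (-s - 1))"
      by blast
    have "z powr (-s-1) \<le> a powr (-s-1)"
      using z that assms by (intro powr_mono2') auto
    have "u powr (-s) - v powr (-s) = (v - u) * s * z powr (-s - 1)"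
      using z(3) by (simp add: algebra_simps)
    moreover have "0 \<le> (v - u) * s * z powr (-s - 1)" using that assms by simp
    ultimately have "\<bar>u powr (-s) - v powr (-s)\<bar> = (v - u) * s * z powr (-s - 1)" by simp
    moreover have "(v - u) * s * z powr (-s - 1) \<le> (v - u) * s * a powr (-s - 1)"
      using \<open>z powr (-s-1) \<le> a powr (-s-1)\<close> that assms by (intro mult_left_mono) auto
    ultimately show ?thesis using that by (simp add: algebra_simps)
  qed
  show ?thesis
  proof (cases x y rule: linorder_cases)
    case less then show ?thesis using main[of x y] assms by simp
  next
    case greater then show ?thesis using main[of y x] assms by (simp add: abs_minus_commute)
  qed simp
qed

context heavy
begin

definition Kc :: "int \<Rightarrow> real \<Rightarrow> real" where
  "Kc k L = (1+\<alpha>) * 2 powr (2+\<alpha>) + 2 + 2 * (real_of_int k / L) powr (1+\<alpha>)"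

lemma pmf_pos_formula: "j \<noteq> 0 \<Longrightarrow> pmf p j = \<bar>real_of_int j\<bar> powr (-(1+\<alpha>)) / (2*Z)"
  by (simp add: pmf_p)

lemma pmf_nonneg': "0 \<le> pmf p j" by simp

lemma supb_eq:
  assumes "0 < L" "0 < k"
  shows "supb L = (real_of_int k / L) powr (1+\<alpha>) * pmf p k"
proof -
  let ?t = "1 + \<alpha>"
  have e1: "(real_of_int k / L) powr ?t = real_of_int k powr ?t / L powr ?t" using assms by (simp add: powr_divide)
  have e2: "real_of_int k powr (-?t) = 1 / real_of_int k powr ?t" by (rule powr_minus_divide)
  have e3: "L powr (-?t) = 1 / L powr ?t" by (rule powr_minus_divide)
  have kp: "0 < real_of_int k powr ?t" using assms by simp
  have "pmf p k = real_of_int k powr (-?t) / (2*Z)" using assms by (simp add: pmf_p)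
  then show ?thesis using kp Z_pos assms unfolding supb_def e1 e2 e3 by (simp add: field_simps)
qed

lemma smooth:
  assumes k: "0 < k" and L: "0 < L" "2 * L < real_of_int k"
  shows "\<bar>hfun k L r - pmf p k\<bar> \<le> Kc k L * pmf p k * \<bar>real_of_int r\<bar> / real_of_int k"
proof (cases "\<bar>real_of_int r\<bar> \<le> real_of_int k / 2")
  case True
  let ?s = "1 + \<alpha>"
  have kr: "real_of_int k / 2 \<le> real_of_int (k - r)" using True by linarith
  then have big: "L < \<bar>real_of_int (k - r)\<bar>" using L by linarith
  have kr0: "k - r \<noteq> 0" using kr k by auto
  have "hfun k L r = pmf p (k - r)" using big by (simp add: hfun_def)
  then have "\<bar>hfun k L r - pmf p k\<bar> = \<bar>real_of_int (k - r) powr (-?s) - real_of_int k powr (-?s)\<bar> / (2*Z)"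
    using kr0 k kr Z_pos by (simp add: pmf_p diff_divide_distrib[symmetric])
  also have "\<dots> \<le> ?s * (real_of_int k / 2) powr (-?s-1) * \<bar>real_of_int (k-r) - real_of_int k\<bar> / (2*Z)"
    using k kr alpha_gt Z_pos by (intro divide_right_mono powr_diff_bound) auto
  also have "(real_of_int k / 2) powr (-?s-1) = 2 powr (2+\<alpha>) * real_of_int k powr (-?s) / real_of_int k"
  proof -
    have e0: "-?s-1 = -(2+\<alpha>)" by simp
    have e1: "(real_of_int k / 2) powr (2+\<alpha>) = real_of_int k powr (2+\<alpha>) / 2 powr (2+\<alpha>)"
      using k by (simp add: powr_divide)
    have e2: "real_of_int k powr (2+\<alpha>) = real_of_int k powr ?s * real_of_int k"
    proof -
      have "real_of_int k powr (2+\<alpha>) = real_of_int k powr (?s + 1)" by (simp add: add.commute add.left_commute)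
      also have "\<dots> = real_of_int k powr ?s * real_of_int k powr 1" by (rule powr_add)
      finally show ?thesis using k by simp
    qed
    have e3: "real_of_int k powr (-?s) = 1 / real_of_int k powr ?s" by (rule powr_minus_divide)
    have kp: "0 < real_of_int k powr ?s" using k by simp
    show ?thesis unfolding e0 powr_minus_divide[of _ "2+\<alpha>"] e1 e2 e3 using k kp
      by (simp add: field_simps)
  qed
  finally have "\<bar>hfun k L r - pmf p k\<bar> \<le> (1+\<alpha>) * 2 powr (2+\<alpha>) * pmf p k * \<bar>real_of_int r\<bar> / real_of_int k"
    using k by (simp add: pmf_p field_simps)
  also have "\<dots> \<le> Kc k L * pmf p k * \<bar>real_of_int r\<bar> / real_of_int k"
    using k L by (intro divide_right_mono mult_right_mono) (auto simp: Kc_def)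
  finally show ?thesis .
next
  case False
  have h1: "hfun k L r \<le> supb L"
  proof (cases "L < \<bar>real_of_int (k-r)\<bar>")
    case True
    then have "hfun k L r = pmf p (k - r)" by (simp add: hfun_def)
    also have "\<dots> \<le> supb L" unfolding supb_def by (rule pmf_le_sup) (use True L in auto)
    finally show ?thesis .
  next
    case False
    then show ?thesis using Z_pos L by (simp add: hfun_def supb_def)
  qed
  have h0: "0 \<le> hfun k L r" by (simp add: hfun_def)
  have r1: "1 \<le> 2 * \<bar>real_of_int r\<bar> / real_of_int k" using False k by (simp add: field_simps)
  have "\<bar>hfun k L r - pmf p k\<bar> \<le> supb L + pmf p k" unfolding abs_le_iff using h0 h1 pmf_nonneg'[of k] by linarith
  also have "\<dots> = ((real_of_int k / L) powr (1+\<alpha>) + 1) * pmf p k"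
    using supb_eq[OF L(1) k] by (simp add: algebra_simps)
  also have "\<dots> \<le> ((real_of_int k / L) powr (1+\<alpha>) + 1) * pmf p k * (2 * \<bar>real_of_int r\<bar> / real_of_int k)"
    using r1 mult_left_mono[OF r1, of "((real_of_int k / L) powr (1+\<alpha>) + 1) * pmf p k"] by simp
  also have "\<dots> \<le> Kc k L * pmf p k * \<bar>real_of_int r\<bar> / real_of_int k"
  proof -
    have "((real_of_int k / L) powr (1+\<alpha>) + 1) * 2 \<le> Kc k L"
      unfolding Kc_def using alpha_gt by (simp add: algebra_simps)
    then have "((real_of_int k / L) powr (1+\<alpha>) + 1) * 2 * (pmf p k * \<bar>real_of_int r\<bar> / real_of_int k)
               \<le> Kc k L * (pmf p k * \<bar>real_of_int r\<bar> / real_of_int k)"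
      using k by (intro mult_right_mono) auto
    then show ?thesis by (simp add: algebra_simps)
  qed
  finally show ?thesis .
qed


lemma pk_le_supb:
  assumes "0 < L" "L < real_of_int k"
  shows "pmf p k \<le> supb L"
  unfolding supb_def by (rule pmf_le_sup) (use assms in auto)

lemma supb_nonneg: "0 \<le> supb L"
  using Z_pos by (simp add: supb_def)

lemma hfun_bounds: "0 \<le> hfun k L r" "0 < L \<Longrightarrow> hfun k L r \<le> supb L"
proof -
  show "0 \<le> hfun k L r" by (simp add: hfun_def)
  assume L: "0 < L"
  show "hfun k L r \<le> supb L"
  proof (cases "L < \<bar>real_of_int (k-r)\<bar>")
    case True
    then have "hfun k L r = pmf p (k - r)" by (simp add: hfun_def)
    also have "\<dots> \<le> supb L" unfolding supb_def by (rule pmf_le_sup) (use True L in auto)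
    finally show ?thesis .
  next
    case False
    then show ?thesis using Z_pos L by (simp add: hfun_def supb_def)
  qed
qed

definition err1 :: "real \<Rightarrow> int \<Rightarrow> real \<Rightarrow> real \<Rightarrow> real" where
  "err1 n k L s = supb L * n * tl L + Kc k L * pmf p k * ((n * sig2 L / s + s) / 2) / real_of_int k"

lemma one_big_err:
  assumes A: "finite A" "a \<notin> A" and k: "0 < k" and L: "0 < L" "2 * L < real_of_int k" and s: "0 < s"
  shows "\<bar>measure_pmf.prob (PP (insert a A)) {f. (\<Sum>b\<in>insert a A. f b) = k \<and> L < \<bar>real_of_int (f a)\<bar>} - pmf p k\<bar>
         \<le> err1 (real (card A)) k L s"
proof -
  let ?cnt = "\<lambda>g. \<Sum>b\<in>A. indicator {y. L < \<bar>real_of_int y\<bar>} (g b) :: real"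
  let ?Ttr = "\<lambda>g. \<Sum>b\<in>A. trr L (g b)"
  let ?B = "\<lambda>g. supb L * ?cnt g + Kc k L * pmf p k * \<bar>?Ttr g\<bar> / real_of_int k"
  have Kc0: "0 \<le> Kc k L" unfolding Kc_def using alpha_gt by (intro add_nonneg_nonneg) auto
  have inth: "integrable (measure_pmf (PP A)) (\<lambda>g. hfun k L (\<Sum>b\<in>A. g b))"
    by (intro measure_pmf.integrable_const_bound[where B="supb L"] AE_I2) (use hfun_bounds L in auto)
  have cntb: "0 \<le> ?cnt g \<and> ?cnt g \<le> real (card A)" for g
  proof
    show "0 \<le> ?cnt g" by (intro sum_nonneg) auto
    have "?cnt g \<le> (\<Sum>b\<in>A. 1)" by (intro sum_mono) (auto simp: indicator_def)
    then show "?cnt g \<le> real (card A)" by simp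
  qed
  have intcnt: "integrable (measure_pmf (PP A)) ?cnt"
  proof (intro measure_pmf.integrable_const_bound[where B="real (card A)"] AE_I2)
    fix g show "norm (?cnt g) \<le> real (card A)" using cntb[of g] by simp
  qed simp
  have intT: "integrable (measure_pmf (PP A)) (\<lambda>g. \<bar>?Ttr g\<bar>)"
    by (intro measure_pmf.integrable_const_bound[where B="real (card A) * max 0 L"] AE_I2)
       (use trr_sum_bound[where A=A and L=L] in auto)
  have pw: "\<bar>hfun k L (\<Sum>b\<in>A. g b) - pmf p k\<bar> \<le> ?B g" for g
  proof (cases "\<forall>b\<in>A. \<bar>real_of_int (g b)\<bar> \<le> L")
    case True
    then have "?Ttr g = real_of_int (\<Sum>b\<in>A. g b)" by (simp add: trr_def)
    moreover have "0 \<le> supb L * ?cnt g" using supb_nonneg by (intro mult_nonneg_nonneg sum_nonneg) auto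
    ultimately show ?thesis using smooth[OF k L, of "\<Sum>b\<in>A. g b"] by simp
  next
    case False
    then obtain b where b: "b \<in> A" "L < \<bar>real_of_int (g b)\<bar>" by auto
    have "1 \<le> ?cnt g"
    proof -
      have "indicator {y. L < \<bar>real_of_int y\<bar>} (g b) \<le> ?cnt g"
        using A b by (intro member_le_sum) auto
      then show ?thesis using b by simp
    qed
    then have "supb L * 1 \<le> supb L * ?cnt g" using supb_nonneg[of L] by (intro mult_left_mono) auto
    moreover have "\<bar>hfun k L (\<Sum>b\<in>A. g b) - pmf p k\<bar> \<le> supb L"
    proof -
      have "0 \<le> hfun k L (\<Sum>b\<in>A. g b)" "hfun k L (\<Sum>b\<in>A. g b) \<le> supb L"
        using hfun_bounds[where k=k and L=L] L by auto
      moreover have "pmf p k \<le> supb L" using L by (intro pk_le_supb) auto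
      moreover have "0 \<le> pmf p k" by simp
      ultimately show ?thesis unfolding abs_le_iff by linarith
    qed
    moreover have "0 \<le> Kc k L * pmf p k * \<bar>?Ttr g\<bar> / real_of_int k" using Kc0 k by simp
    ultimately show ?thesis by linarith
  qed
  have "measure_pmf.prob (PP (insert a A)) {f. (\<Sum>b\<in>insert a A. f b) = k \<and> L < \<bar>real_of_int (f a)\<bar>} - pmf p k
        = measure_pmf.expectation (PP A) (\<lambda>g. hfun k L (\<Sum>b\<in>A. g b) - pmf p k)"
    using inth by (simp add: PP_one_big[OF A])
  then have "\<bar>measure_pmf.prob (PP (insert a A)) {f. (\<Sum>b\<in>insert a A. f b) = k \<and> L < \<bar>real_of_int (f a)\<bar>} - pmf p k\<bar>
        \<le> measure_pmf.expectation (PP A) (\<lambda>g. \<bar>hfun k L (\<Sum>b\<in>A. g b) - pmf p k\<bar>)"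
    by (simp add: integral_abs_bound)
  also have "\<dots> \<le> measure_pmf.expectation (PP A) ?B"
    by (intro Bochner_Integration.integral_mono pw) (use inth intcnt intT in auto)
  also have "\<dots> = supb L * measure_pmf.expectation (PP A) ?cnt + Kc k L * pmf p k * measure_pmf.expectation (PP A) (\<lambda>g. \<bar>?Ttr g\<bar>) / real_of_int k"
    using intcnt intT by simp
  also have "\<dots> \<le> supb L * (real (card A) * tl L) + Kc k L * pmf p k * ((real (card A) * sig2 L / s + s) / 2) / real_of_int k"
  proof -
    have e2: "measure_pmf.expectation (PP A) (\<lambda>g. \<bar>?Ttr g\<bar>) \<le> (real (card A) * sig2 L / s + s) / 2"
      by (rule PP_abs_mean[OF A(1) s])
    have "Kc k L * pmf p k * measure_pmf.expectation (PP A) (\<lambda>g. \<bar>?Ttr g\<bar>) \<le> Kc k L * pmf p k * ((real (card A) * sig2 L / s + s) / 2)"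
      using Kc0 by (intro mult_left_mono e2) auto
    then have "Kc k L * pmf p k * measure_pmf.expectation (PP A) (\<lambda>g. \<bar>?Ttr g\<bar>) / real_of_int k \<le> Kc k L * pmf p k * ((real (card A) * sig2 L / s + s) / 2) / real_of_int k"
      using k by (intro divide_right_mono) auto
    then show ?thesis using PP_count_big[OF A(1), of L] by simp
  qed
  also have "\<dots> = err1 (real (card A)) k L s" by (simp add: err1_def)
  finally show ?thesis .
qed

end




context heavy
begin

lemma ind_int: "integrable (measure_pmf q) (indicator S :: _ \<Rightarrow> real)"
  by (intro measure_pmf.integrable_const_bound[where B=1] AE_I2) auto

lemma core_main:
  assumes A: "finite A" and k: "0 < k" and L: "0 < L" "2 * L < real_of_int k" and s: "0 < s" and h: "0 \<le> h"
  shows "\<bar>measure_pmf.prob (PP A) {f. (\<Sum>a\<in>A. f a) = k} - real (card A) * pmf p k\<bar>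
         \<le> exp (- h * real_of_int k) * (measure_pmf.expectation p (\<lambda>y. exp (h * trr L y))) ^ card A
           + 2 * (real (card A))^2 * supb L * tl L
           + Kc k L * pmf p k * ((real (card A))^2 * sig2 L / s + real (card A) * s) / (2 * real_of_int k)"
proof -
  define m where "m = real (card A)"
  define T where "T = {f. (\<Sum>a\<in>A. f a) = k}"
  define D where "D = (\<lambda>a. {f. (\<Sum>b\<in>A. f b) = k \<and> L < \<bar>real_of_int (f a)\<bar>})"
  define E0 where "E0 = {f. (\<Sum>a\<in>A. f a) = k \<and> (\<forall>a\<in>A. \<bar>real_of_int (f a)\<bar> \<le> L)}"
  define Pab where "Pab = (\<lambda>a b. {f. (\<Sum>c\<in>A. f c) = k \<and> L < \<bar>real_of_int (f a)\<bar> \<and> L < \<bar>real_of_int (f b)\<bar>})"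
  define e where "e = err1 (m - 1) k L s"
  let ?P = "measure_pmf.prob (PP A)"
  have Kc0: "0 \<le> Kc k L" unfolding Kc_def using alpha_gt by (intro add_nonneg_nonneg) auto
  have st0: "0 \<le> supb L * tl L" using supb_nonneg tl_nonneg by simp
  have Da: "\<bar>?P (D a) - pmf p k\<bar> \<le> e" if a: "a \<in> A" for a
  proof -
    have Aeq: "insert a (A - {a}) = A" using a by auto
    have "0 < card A" using A a by (auto simp: card_gt_0_iff)
    then have "real (card (A - {a})) = m - 1" using a A by (simp add: m_def card_Diff_singleton of_nat_diff)
    then show ?thesis
      using one_big_err[of "A - {a}" a k L s] A k L s Aeq by (simp add: D_def e_def)
  qed
  have up: "?P T \<le> ?P E0 + (\<Sum>a\<in>A. ?P (D a))"
  proof -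
    have "T \<subseteq> E0 \<union> (\<Union>a\<in>A. D a)" by (auto simp: T_def E0_def D_def not_le)
    then have "?P T \<le> ?P (E0 \<union> (\<Union>a\<in>A. D a))" by (intro measure_pmf.finite_measure_mono) auto
    also have "\<dots> \<le> ?P E0 + ?P (\<Union>a\<in>A. D a)" by (rule measure_subadditive) auto
    also have "?P (\<Union>a\<in>A. D a) \<le> (\<Sum>a\<in>A. ?P (D a))"
      by (rule measure_pmf.finite_measure_subadditive_finite) (use A in auto)
    finally show ?thesis by simp
  qed
  have pw: "(\<Sum>a\<in>A. indicator (D a) f) \<le> indicator T f + (\<Sum>a\<in>A. \<Sum>b\<in>A - {a}. indicator (Pab a b) f :: real)" for f
  proof (cases "f \<in> T")
    case False
    then have "f \<notin> D a" "f \<notin> Pab a b" for a b by (auto simp: T_def D_def Pab_def)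
    then show ?thesis using False by simp
  next
    case True
    define x where "x = (\<lambda>a. indicator {y. L < \<bar>real_of_int y\<bar>} (f a) :: real)"
    define t where "t = (\<Sum>a\<in>A. x a)"
    have x01: "x a * x a = x a" for a by (simp add: x_def indicator_def)
    have lhs: "(\<Sum>a\<in>A. indicator (D a) f) = t"
      using True unfolding t_def x_def by (intro sum.cong) (auto simp: T_def D_def indicator_def)
    have rhs: "(\<Sum>a\<in>A. \<Sum>b\<in>A - {a}. indicator (Pab a b) f :: real) = t * t - t"
    proof -
      have "(\<Sum>a\<in>A. \<Sum>b\<in>A - {a}. indicator (Pab a b) f :: real) = (\<Sum>a\<in>A. x a * (t - x a))"
      proof (intro sum.cong refl)
        fix a assume a: "a \<in> A"
        have "(\<Sum>b\<in>A - {a}. indicator (Pab a b) f :: real) = (\<Sum>b\<in>A - {a}. x a * x b)"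
          using True by (intro sum.cong) (auto simp: T_def Pab_def x_def indicator_def)
        also have "\<dots> = x a * (\<Sum>b\<in>A - {a}. x b)" by (simp add: sum_distrib_left)
        also have "(\<Sum>b\<in>A - {a}. x b) = t - x a"
          unfolding t_def using A a by (simp add: sum.remove)
        finally show "(\<Sum>b\<in>A - {a}. indicator (Pab a b) f :: real) = x a * (t - x a)" .
      qed
      also have "\<dots> = (\<Sum>a\<in>A. x a * t - x a)" by (simp add: algebra_simps x01)
      also have "\<dots> = t * t - t" by (simp add: sum_subtractf sum_distrib_right t_def)
      finally show ?thesis .
    qed
    have "t \<le> 1 + (t * t - t)"
    proof -
      have "0 \<le> (t - 1) * (t - 1)" by simp
      then show ?thesis by (simp add: algebra_simps)
    qed
    then show ?thesis using True lhs rhs by simp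
  qed
  have low: "(\<Sum>a\<in>A. ?P (D a)) \<le> ?P T + (\<Sum>a\<in>A. \<Sum>b\<in>A - {a}. ?P (Pab a b))"
  proof -
    have "(\<Sum>a\<in>A. ?P (D a)) = measure_pmf.expectation (PP A) (\<lambda>f. \<Sum>a\<in>A. indicator (D a) f)"
      by (subst Bochner_Integration.integral_sum) (auto intro: ind_int)
    also have "\<dots> \<le> measure_pmf.expectation (PP A) (\<lambda>f. indicator T f + (\<Sum>a\<in>A. \<Sum>b\<in>A - {a}. indicator (Pab a b) f))"
      by (intro Bochner_Integration.integral_mono pw) (auto intro!: Bochner_Integration.integrable_sum Bochner_Integration.integrable_add ind_int)
    also have "\<dots> = ?P T + measure_pmf.expectation (PP A) (\<lambda>f. \<Sum>a\<in>A. \<Sum>b\<in>A - {a}. indicator (Pab a b) f :: real)"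
      by (subst Bochner_Integration.integral_add) (auto intro!: Bochner_Integration.integrable_sum ind_int)
    also have "measure_pmf.expectation (PP A) (\<lambda>f. \<Sum>a\<in>A. \<Sum>b\<in>A - {a}. indicator (Pab a b) f :: real) =
               (\<Sum>a\<in>A. measure_pmf.expectation (PP A) (\<lambda>f. \<Sum>b\<in>A - {a}. indicator (Pab a b) f :: real))"
      by (rule Bochner_Integration.integral_sum) (intro Bochner_Integration.integrable_sum ind_int)
    also have "\<dots> = (\<Sum>a\<in>A. \<Sum>b\<in>A - {a}. ?P (Pab a b))"
      by (intro sum.cong refl, subst Bochner_Integration.integral_sum) (auto intro: ind_int)
    finally show ?thesis .
  qed
  have pair: "?P (Pab a b) \<le> supb L * tl L" if "a \<in> A" "b \<in> A - {a}" for a b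
  proof -
    have Aeq: "insert b (A - {b}) = A" using that by auto
    have "?P (Pab a b) = measure_pmf.prob (PP (insert b (A - {b}))) {f. (\<Sum>c\<in>insert b (A - {b}). f c) = k \<and> L < \<bar>real_of_int (f a)\<bar> \<and> L < \<bar>real_of_int (f b)\<bar>}"
      unfolding Aeq by (simp add: Pab_def)
    also have "\<dots> \<le> supb L * tl L"
      by (rule PP_two_big) (use A that L in auto)
    finally show ?thesis .
  qed
  have pairsum: "(\<Sum>a\<in>A. \<Sum>b\<in>A - {a}. ?P (Pab a b)) \<le> m * (m - 1) * (supb L * tl L)"
  proof -
    have "(\<Sum>a\<in>A. \<Sum>b\<in>A - {a}. ?P (Pab a b)) \<le> (\<Sum>a\<in>A. \<Sum>b\<in>A - {a}. supb L * tl L)"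
      by (intro sum_mono pair) auto
    also have "\<dots> = (\<Sum>a\<in>A. (m - 1) * (supb L * tl L))"
    proof (intro sum.cong refl)
      fix a assume "a \<in> A"
      moreover have "0 < card A" using A \<open>a \<in> A\<close> by (auto simp: card_gt_0_iff)
      ultimately have "real (card (A - {a})) = m - 1" using A by (simp add: m_def card_Diff_singleton of_nat_diff)
      then show "(\<Sum>b\<in>A - {a}. supb L * tl L) = (m - 1) * (supb L * tl L)" by simp
    qed
    also have "\<dots> = m * (m - 1) * (supb L * tl L)" by (simp add: m_def)
    finally show ?thesis .
  qed
  have sumD_up: "(\<Sum>a\<in>A. ?P (D a)) \<le> m * pmf p k + m * e"
  proof -
    have "(\<Sum>a\<in>A. ?P (D a)) \<le> (\<Sum>a\<in>A. pmf p k + e)"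
    proof (intro sum_mono)
      fix a assume "a \<in> A" then show "?P (D a) \<le> pmf p k + e" using Da[of a] by (simp add: abs_le_iff)
    qed
    then show ?thesis by (simp add: m_def algebra_simps)
  qed
  have sumD_low: "m * pmf p k - m * e \<le> (\<Sum>a\<in>A. ?P (D a))"
  proof -
    have "(\<Sum>a\<in>A. pmf p k - e) \<le> (\<Sum>a\<in>A. ?P (D a))"
    proof (intro sum_mono)
      fix a assume "a \<in> A" then show "pmf p k - e \<le> ?P (D a)" using Da[of a] by (simp add: abs_le_iff)
    qed
    then show ?thesis by (simp add: m_def algebra_simps)
  qed
  have E0b: "?P E0 \<le> exp (- h * real_of_int k) * (measure_pmf.expectation p (\<lambda>y. exp (h * trr L y))) ^ card A"
    unfolding E0_def by (rule PP_chernoff[OF A h])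
  have E00: "0 \<le> ?P E0" by simp
  have m0: "0 \<le> m" by (simp add: m_def)
  have mm0: "0 \<le> m * (m - 1)"
  proof (cases "card A = 0")
    case True then show ?thesis by (simp add: m_def)
  next
    case False then have "1 \<le> m" by (simp add: m_def)
    then show ?thesis using m0 by simp
  qed
  have mm: "m * (m - 1) \<le> m^2" by (simp add: power2_eq_square algebra_simps m0)
  have kne: "real_of_int k \<noteq> 0" using k by simp
  define X where "X = m * (m - 1) * (supb L * tl L)"
  define Y where "Y = Kc k L * pmf p k * (m * (m - 1) * sig2 L / s + m * s) / (2 * real_of_int k)"
  define X' where "X' = m^2 * (supb L * tl L)"
  define Y' where "Y' = Kc k L * pmf p k * (m^2 * sig2 L / s + m * s) / (2 * real_of_int k)"
  have me: "m * e = X + Y"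
  proof -
    have "m * e = m * (m - 1) * (supb L * tl L) + m * (Kc k L * pmf p k * (((m - 1) * sig2 L / s + s) / 2) / real_of_int k)"
      by (simp add: e_def err1_def algebra_simps)
    also have "m * (Kc k L * pmf p k * (((m - 1) * sig2 L / s + s) / 2) / real_of_int k) = Y"
      unfolding Y_def using kne s by (simp add: field_simps)
    finally show ?thesis by (simp add: X_def)
  qed
  have A1: "X \<le> X'" unfolding X_def X'_def by (rule mult_right_mono[OF mm st0])
  have A2: "m * (m - 1) * sig2 L / s \<le> m^2 * sig2 L / s"
    by (intro divide_right_mono mult_right_mono mm) (use sig2_nonneg s in auto)
  have A3: "Y \<le> Y'" unfolding Y_def Y'_def
    by (intro divide_right_mono mult_left_mono add_right_mono A2) (use Kc0 k in auto)
  have X0: "0 \<le> X" unfolding X_def using mm0 st0 by simp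
  have "?P T - m * pmf p k \<le> ?P E0 + m * e" using up sumD_up by linarith
  moreover have "m * pmf p k - ?P T \<le> m * e + X"
    using low sumD_low pairsum unfolding X_def by linarith
  ultimately have "\<bar>?P T - m * pmf p k\<bar> \<le> ?P E0 + (2 * X' + Y')"
    using E00 X0 me A1 A3 unfolding abs_le_iff by linarith
  also have "\<dots> \<le> exp (- h * real_of_int k) * (measure_pmf.expectation p (\<lambda>y. exp (h * trr L y))) ^ card A + (2 * X' + Y')"
    using E0b by simp
  finally show ?thesis unfolding X'_def Y'_def T_def m_def by (simp add: algebra_simps)
qed

end




definition XX :: "(int \<Rightarrow> 'a \<Rightarrow> nat) \<Rightarrow> (int \<Rightarrow> nat \<Rightarrow> 'a \<Rightarrow> int) \<Rightarrow> int + int \<times> nat \<Rightarrow> 'a \<Rightarrow> int" where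
  "XX N Y j \<omega> = (case j of Inl x \<Rightarrow> int (N x \<omega>) | Inr (x, i) \<Rightarrow> Y x i \<omega>)"

definition Idx :: "(int + int \<times> nat) set" where
  "Idx = range Inl \<union> {Inr (x, i) | x i. i \<ge> 1}"

lemma allsets:
  fixes I :: "'i set"
  assumes "finite I" "G \<subseteq> PiE I (\<lambda>_. UNIV)"
  shows "G \<in> sets (PiM I (\<lambda>_. count_space (UNIV::int set)))"
proof (rule sets.countable)
  show "countable G"
    using assms by (intro countable_subset[OF assms(2)] countable_PiE) auto
  fix g assume "g \<in> G"
  then have g: "g \<in> PiE I (\<lambda>_. UNIV)" using assms by auto
  have "{g} = PiE I (\<lambda>i. {g i})"
  proof (intro set_eqI iffI)
    fix x assume "x \<in> {g}" then show "x \<in> PiE I (\<lambda>i. {g i})" using g by auto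
  next
    fix x assume x: "x \<in> PiE I (\<lambda>i. {g i})"
    have "x i = g i" for i
    proof (cases "i \<in> I")
      case True then show ?thesis using x by (auto simp: PiE_def Pi_def)
    next
      case False then show ?thesis using x g by (auto simp: PiE_def extensional_def)
    qed
    then show "x \<in> {g}" by auto
  qed
  also have "\<dots> \<in> sets (PiM I (\<lambda>_. count_space (UNIV::int set)))"
    using assms by (intro sets_PiM_I_finite) auto
  finally show "{g} \<in> sets (PiM I (\<lambda>_. count_space (UNIV::int set)))" .
qed

lemma distr_PP:
  fixes I :: "'i set"
  assumes "finite I" "I \<noteq> {}"
  shows "distr (measure_pmf (Pi_pmf I 0 (\<lambda>_. q))) (PiM I (\<lambda>_. count_space UNIV)) (\<lambda>f. restrict f I) = PiM I (\<lambda>_. measure_pmf q)"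
proof -
  have "distr (measure_pmf (Pi_pmf I 0 (\<lambda>_. q))) (PiM I (\<lambda>_. count_space UNIV)) (\<lambda>f. restrict f I) =
        PiM I (\<lambda>i. distr (measure_pmf (Pi_pmf I 0 (\<lambda>_. q))) (count_space UNIV) (\<lambda>f. f i))"
    using prob_space.indep_vars_iff_distr_eq_PiM'[OF measure_pmf.prob_space_axioms[of "Pi_pmf I 0 (\<lambda>_. q)"], where I=I and M'="\<lambda>_. count_space UNIV" and X="\<lambda>i f. f i"]
      indep_vars_Pi_pmf[OF assms(1), of 0 "\<lambda>_. q"] assms by simp
  also have "\<dots> = PiM I (\<lambda>_. measure_pmf q)"
  proof (rule PiM_cong[OF refl])
    fix i assume "i \<in> I"
    have "distr (measure_pmf (Pi_pmf I 0 (\<lambda>_. q))) (count_space UNIV) (\<lambda>f. f i) = measure_pmf (map_pmf (\<lambda>f. f i) (Pi_pmf I 0 (\<lambda>_. q)))"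
      by (simp add: map_pmf_rep_eq)
    also have "\<dots> = measure_pmf q" using assms \<open>i \<in> I\<close> by (simp add: Pi_pmf_component)
    finally show "distr (measure_pmf (Pi_pmf I 0 (\<lambda>_. q))) (count_space UNIV) (\<lambda>f. f i) = measure_pmf q" .
  qed
  finally show ?thesis .
qed

locale model = prob_space M for M :: "'a measure" +
  fixes N :: "int \<Rightarrow> 'a \<Rightarrow> nat" and Y :: "int \<Rightarrow> nat \<Rightarrow> 'a \<Rightarrow> int" and lam :: real and p :: "int pmf"
  assumes lam_pos: "0 < lam"
  and indep: "indep_vars (\<lambda>_. count_space UNIV) (XX N Y) Idx"
  and poisson: "\<And>x m. prob {\<omega> \<in> space M. N x \<omega> = m} = lam ^ m / fact m * exp (- lam)"
  and ydist: "\<And>x i k. 1 \<le> i \<Longrightarrow> prob {\<omega> \<in> space M. Y x i \<omega> = k} = pmf p k"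
begin

abbreviation "X \<equiv> XX N Y"

definition Yidx :: "(int + int \<times> nat) set" where
  "Yidx = Inr ` {(x, i). 1 \<le> i}"

lemma Yidx_Idx: "Yidx \<subseteq> Idx" by (auto simp: Yidx_def Idx_def)

lemma rvX: "j \<in> Idx \<Longrightarrow> X j \<in> measurable M (count_space UNIV)"
  using indep by (auto simp: indep_vars_def)

lemma distr_comp:
  assumes "j \<in> Yidx"
  shows "distr M (count_space UNIV) (X j) = measure_pmf p"
proof (rule measure_eqI_countable[where A=UNIV])
  show "sets (distr M (count_space UNIV) (X j)) = Pow UNIV" by simp
  show "sets (measure_pmf p) = Pow UNIV" by simp
  show "countable (UNIV :: int set)" by simp
  fix a :: int
  from assms obtain x i where j: "j = Inr (x, i)" "1 \<le> i" by (auto simp: Yidx_def)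
  have meas: "X j \<in> measurable M (count_space UNIV)" using assms Yidx_Idx by (intro rvX) auto
  have "emeasure (distr M (count_space UNIV) (X j)) {a} = emeasure M (X j -` {a} \<inter> space M)"
    using meas by (simp add: emeasure_distr)
  also have "X j -` {a} \<inter> space M = {\<omega> \<in> space M. Y x i \<omega> = a}" by (auto simp: j XX_def)
  also have "emeasure M \<dots> = ennreal (pmf p a)"
    using ydist[OF j(2), of x a] meas j by (simp add: emeasure_eq_measure XX_def)
  also have "\<dots> = emeasure (measure_pmf p) {a}" by (simp add: emeasure_pmf_single)
  finally show "emeasure (distr M (count_space UNIV) (X j)) {a} = emeasure (measure_pmf p) {a}" .
qed

lemma distr_Y:
  assumes "finite I" "I \<noteq> {}" "I \<subseteq> Yidx"
  shows "distr M (PiM I (\<lambda>_. count_space UNIV)) (\<lambda>\<omega>. restrict (\<lambda>j. X j \<omega>) I) = PiM I (\<lambda>_. measure_pmf p)"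
proof -
  have ind: "indep_vars (\<lambda>_. count_space UNIV) X I"
    using indep_vars_subset[OF indep] assms Yidx_Idx by auto
  have "distr M (PiM I (\<lambda>_. count_space UNIV)) (\<lambda>\<omega>. restrict (\<lambda>j. X j \<omega>) I) = PiM I (\<lambda>i. distr M (count_space UNIV) (X i))"
    using indep_vars_iff_distr_eq_PiM'[where I=I and M'="\<lambda>_. count_space UNIV" and X=X] ind assms rvX Yidx_Idx by auto
  also have "\<dots> = PiM I (\<lambda>_. measure_pmf p)"
    using assms by (intro PiM_cong refl distr_comp) auto
  finally show ?thesis .
qed

lemma transfer:
  assumes "finite I" "I \<subseteq> Yidx" "G \<subseteq> PiE I (\<lambda>_. UNIV)"
  shows "prob {\<omega> \<in> space M. restrict (\<lambda>j. X j \<omega>) I \<in> G} = measure_pmf.prob (Pi_pmf I 0 (\<lambda>_. p)) {f. restrict f I \<in> G}"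
proof (cases "I = {}")
  case True
  have r1: "restrict (\<lambda>j. X j \<omega>) I = (\<lambda>_. undefined)" for \<omega> using True by auto
  have r2: "restrict f I = (\<lambda>_. undefined)" for f :: "_ \<Rightarrow> int" using True by auto
  show ?thesis
  proof (cases "(\<lambda>_. undefined) \<in> G")
    case True
    then have "{\<omega> \<in> space M. restrict (\<lambda>j. X j \<omega>) I \<in> G} = space M" "{f. restrict f I \<in> G} = (UNIV :: (_ \<Rightarrow> int) set)"
      using r1 r2 by auto
    then show ?thesis by (simp add: prob_space measure_pmf.prob_space)
  next
    case False
    then have "{\<omega> \<in> space M. restrict (\<lambda>j. X j \<omega>) I \<in> G} = {}" "{f. restrict f I \<in> G} = ({} :: (_ \<Rightarrow> int) set)"
      using r1 r2 by auto
    then show ?thesis by simp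
  qed
next
  case False
  have meas: "(\<lambda>\<omega>. restrict (\<lambda>j. X j \<omega>) I) \<in> measurable M (PiM I (\<lambda>_. count_space UNIV))"
    using assms Yidx_Idx by (intro measurable_restrict rvX) auto
  have Gs: "G \<in> sets (PiM I (\<lambda>_. count_space UNIV))" using assms by (intro allsets) auto
  have "prob {\<omega> \<in> space M. restrict (\<lambda>j. X j \<omega>) I \<in> G} = measure (distr M (PiM I (\<lambda>_. count_space UNIV)) (\<lambda>\<omega>. restrict (\<lambda>j. X j \<omega>) I)) G"
    using meas Gs by (subst measure_distr) (auto simp: vimage_def Int_def conj_commute)
  also have "\<dots> = measure (PiM I (\<lambda>_. measure_pmf p)) G" using distr_Y[OF assms(1) False assms(2)] by simp
  also have "\<dots> = measure (distr (measure_pmf (Pi_pmf I 0 (\<lambda>_. p))) (PiM I (\<lambda>_. count_space UNIV)) (\<lambda>f. restrict f I)) G"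
    using distr_PP[OF assms(1) False, of p] by simp
  also have "\<dots> = measure_pmf.prob (Pi_pmf I 0 (\<lambda>_. p)) {f. restrict f I \<in> G}"
    using Gs assms by (subst measure_distr) (auto simp: vimage_def space_PiM)
  finally show ?thesis .
qed

lemma indep_blocks:
  assumes "finite I1" "finite I2" "I1 \<subseteq> Idx" "I2 \<subseteq> Idx" "I1 \<inter> I2 = {}"
    "G1 \<subseteq> PiE I1 (\<lambda>_. UNIV)" "G2 \<subseteq> PiE I2 (\<lambda>_. UNIV)"
  shows "prob ({\<omega> \<in> space M. restrict (\<lambda>j. X j \<omega>) I1 \<in> G1} \<inter> {\<omega> \<in> space M. restrict (\<lambda>j. X j \<omega>) I2 \<in> G2}) =
         prob {\<omega> \<in> space M. restrict (\<lambda>j. X j \<omega>) I1 \<in> G1} * prob {\<omega> \<in> space M. restrict (\<lambda>j. X j \<omega>) I2 \<in> G2}"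
proof -
  have iv: "indep_var (PiM I1 (\<lambda>_. count_space UNIV)) (\<lambda>\<omega>. restrict (\<lambda>j. X j \<omega>) I1)
                      (PiM I2 (\<lambda>_. count_space UNIV)) (\<lambda>\<omega>. restrict (\<lambda>j. X j \<omega>) I2)"
    by (rule indep_var_restrict[OF indep]) (use assms in auto)
  have "prob ((\<lambda>\<omega>. (restrict (\<lambda>j. X j \<omega>) I1, restrict (\<lambda>j. X j \<omega>) I2)) -` (G1 \<times> G2) \<inter> space M) =
        prob ((\<lambda>\<omega>. restrict (\<lambda>j. X j \<omega>) I1) -` G1 \<inter> space M) * prob ((\<lambda>\<omega>. restrict (\<lambda>j. X j \<omega>) I2) -` G2 \<inter> space M)"
    by (rule indep_varD[OF iv]) (use assms in \<open>auto intro!: allsets\<close>)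
  then show ?thesis
    by (simp add: vimage_def Int_def conj_commute conj_left_commute Collect_conj_eq[symmetric])
qed

end




definition Vset :: "'b set \<Rightarrow> nat \<Rightarrow> ('b \<Rightarrow> nat) set" where
  "Vset F m = {\<nu> \<in> PiE F (\<lambda>_. UNIV). (\<Sum>x\<in>F. \<nu> x) = m}"

lemma Vset_finite:
  assumes "finite F" shows "finite (Vset F m)"
proof (rule finite_subset)
  show "Vset F m \<subseteq> PiE F (\<lambda>_. {..m})"
  proof
    fix \<nu> assume "\<nu> \<in> Vset F m"
    then have "\<nu> \<in> PiE F (\<lambda>_. UNIV)" "(\<Sum>x\<in>F. \<nu> x) = m" by (auto simp: Vset_def)
    moreover have "\<nu> x \<le> (\<Sum>x\<in>F. \<nu> x)" if "x \<in> F" for x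
      using assms that by (intro member_le_sum) auto
    ultimately show "\<nu> \<in> PiE F (\<lambda>_. {..m})" by (auto simp: PiE_def Pi_def)
  qed
  show "finite (PiE F (\<lambda>_. {..m}))" using assms by (intro finite_PiE) auto
qed

lemma Vset_insert:
  assumes "finite F" "z \<notin> F"
  shows "Vset (insert z F) m = (\<lambda>(j, g). g(z := j)) ` (SIGMA j:{..m}. Vset F (m - j))"
proof (intro set_eqI iffI)
  fix \<nu> assume \<nu>: "\<nu> \<in> Vset (insert z F) m"
  define g where "g = \<nu>(z := undefined)"
  have sumF: "(\<Sum>x\<in>F. g x) = (\<Sum>x\<in>F. \<nu> x)"
    using assms by (intro sum.cong) (auto simp: g_def)
  have tot: "\<nu> z + (\<Sum>x\<in>F. \<nu> x) = m" using \<nu> assms by (simp add: Vset_def)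
  have "g \<in> Vset F (m - \<nu> z)"
    using \<nu> sumF tot by (auto simp: Vset_def g_def PiE_def extensional_def)
  moreover have "\<nu> z \<in> {..m}" using tot by auto
  moreover have "\<nu> = g(z := \<nu> z)" by (simp add: g_def)
  ultimately show "\<nu> \<in> (\<lambda>(j, g). g(z := j)) ` (SIGMA j:{..m}. Vset F (m - j))"
    by (intro rev_image_eqI[of "(\<nu> z, g)"]) auto
next
  fix \<nu> assume "\<nu> \<in> (\<lambda>(j, g). g(z := j)) ` (SIGMA j:{..m}. Vset F (m - j))"
  then obtain j g where jg: "j \<le> m" "g \<in> Vset F (m - j)" "\<nu> = g(z := j)" by auto
  have sumF: "(\<Sum>x\<in>F. \<nu> x) = (\<Sum>x\<in>F. g x)"
    using assms jg by (intro sum.cong) auto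
  have "(\<Sum>x\<in>insert z F. \<nu> x) = j + (m - j)"
    using assms jg sumF by (simp add: Vset_def)
  then show "\<nu> \<in> Vset (insert z F) m"
    using jg by (auto simp: Vset_def PiE_def extensional_def)
qed

lemma multinomial_weights:
  fixes c :: real
  assumes "finite F"
  shows "(\<Sum>\<nu>\<in>Vset F m. \<Prod>x\<in>F. c ^ (\<nu> x) / fact (\<nu> x)) = (real (card F) * c) ^ m / fact m"
  using assms
proof (induction F arbitrary: m rule: finite_induct)
  case empty
  show ?case
  proof (cases "m = 0")
    case True
    then have V: "Vset {} m = {\<lambda>_. undefined}" by (auto simp: Vset_def)
    show ?thesis unfolding V using True by simp
  next
    case False
    then have V: "Vset {} m = {}" by (auto simp: Vset_def)
    show ?thesis unfolding V using False by simp
  qed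
next
  case (insert z F)
  let ?w = "\<lambda>F \<nu>. \<Prod>x\<in>F. c ^ (\<nu> x) / fact (\<nu> x)"
  have inj: "inj_on (\<lambda>(j, g). g(z := j)) (SIGMA j:{..m}. Vset F (m - j))"
  proof (rule inj_onI, clarify)
    fix j g j' g' assume a: "j \<le> m" "g \<in> Vset F (m - j)" "j' \<le> m" "g' \<in> Vset F (m - j')" "g(z := j) = g'(z := j')"
    then have "j = j'" by (metis fun_upd_same)
    moreover have "g = g'"
    proof
      fix x show "g x = g' x"
      proof (cases "x = z")
        case True
        then have "g x = undefined" "g' x = undefined" using a insert.hyps by (auto simp: Vset_def PiE_def extensional_def)
        then show ?thesis by simp
      next
        case False then show ?thesis using a(5) by (metis fun_upd_other)
      qed
    qed
    ultimately show "j = j' \<and> g = g'" by simp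
  qed
  have "(\<Sum>\<nu>\<in>Vset (insert z F) m. ?w (insert z F) \<nu>) = (\<Sum>(j, g)\<in>(SIGMA j:{..m}. Vset F (m - j)). ?w (insert z F) (g(z := j)))"
    unfolding Vset_insert[OF insert.hyps] by (subst sum.reindex[OF inj]) (simp add: case_prod_unfold)
  also have "\<dots> = (\<Sum>j\<le>m. \<Sum>g\<in>Vset F (m - j). c ^ j / fact j * ?w F g)"
  proof (subst sum.Sigma[symmetric])
    show "finite {..m}" by simp
    show "\<forall>j\<in>{..m}. finite (Vset F (m - j))" using insert.hyps Vset_finite by auto
    show "(\<Sum>j\<le>m. \<Sum>g\<in>Vset F (m - j). ?w (insert z F) (g(z := j))) = (\<Sum>j\<le>m. \<Sum>g\<in>Vset F (m - j). c ^ j / fact j * ?w F g)"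
    proof (intro sum.cong refl)
      fix j g
      have "?w F (g(z := j)) = ?w F g" using insert.hyps by (intro prod.cong) auto
      then show "?w (insert z F) (g(z := j)) = c ^ j / fact j * ?w F g" using insert.hyps by simp
    qed
  qed
  also have "\<dots> = (\<Sum>j\<le>m. c ^ j / fact j * ((real (card F) * c) ^ (m - j) / fact (m - j)))"
  proof (intro sum.cong refl)
    fix j
    have "(\<Sum>g\<in>Vset F (m - j). c ^ j / fact j * ?w F g) = c ^ j / fact j * (\<Sum>g\<in>Vset F (m - j). ?w F g)"
      by (rule sum_distrib_left[symmetric])
    also have "\<dots> = c ^ j / fact j * ((real (card F) * c) ^ (m - j) / fact (m - j))"
      by (simp only: insert.IH)
    finally show "(\<Sum>g\<in>Vset F (m - j). c ^ j / fact j * ?w F g) = c ^ j / fact j * ((real (card F) * c) ^ (m - j) / fact (m - j))" .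
  qed
  also have "\<dots> = (\<Sum>j\<le>m. of_nat (m choose j) * c ^ j * (real (card F) * c) ^ (m - j)) / fact m"
    by (simp add: sum_divide_distrib binomial_fact field_simps)
  also have "\<dots> = (c + real (card F) * c) ^ m / fact m"
    by (simp add: binomial_ring)
  also have "\<dots> = (real (card (insert z F)) * c) ^ m / fact m"
    using insert.hyps by (simp add: algebra_simps)
  finally show ?case .
qed


definition pois :: "real \<Rightarrow> nat \<Rightarrow> real" where
  "pois l m = l ^ m / fact m * exp (- l)"

context model
begin

definition FF :: "nat \<Rightarrow> int set" where
  "FF n = {- int n..int n}"

lemma FF_finite: "finite (FF n)" by (simp add: FF_def)
lemma FF_ne: "FF n \<noteq> {}" by (simp add: FF_def)
lemma FF_card: "card (FF n) = 2 * n + 1" by (simp add: FF_def)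

definition EN :: "nat \<Rightarrow> (int \<Rightarrow> nat) \<Rightarrow> 'a set" where
  "EN n \<nu> = {\<omega> \<in> space M. \<forall>x\<in>FF n. N x \<omega> = \<nu> x}"

definition Aidx :: "nat \<Rightarrow> (int \<Rightarrow> nat) \<Rightarrow> (int + int \<times> nat) set" where
  "Aidx n \<nu> = Inr ` (SIGMA x:FF n. {1..\<nu> x})"

lemma Aidx_finite: "finite (Aidx n \<nu>)" by (simp add: Aidx_def FF_finite)
lemma Aidx_Yidx: "Aidx n \<nu> \<subseteq> Yidx" by (auto simp: Aidx_def Yidx_def)
lemma Inl_Aidx: "Inl ` FF n \<inter> Aidx n \<nu> = {}" by (auto simp: Aidx_def)
lemma Aidx_Idx: "Aidx n \<nu> \<subseteq> Idx" using Aidx_Yidx Yidx_Idx by blast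
lemma Aidx_card: "card (Aidx n \<nu>) = (\<Sum>x\<in>FF n. \<nu> x)"
  by (simp add: Aidx_def card_image card_SigmaI FF_finite)

definition KK :: "nat \<Rightarrow> 'a \<Rightarrow> nat" where
  "KK n \<omega> = (\<Sum>x\<in>FF n. N x \<omega>)"

definition SS :: "nat \<Rightarrow> 'a \<Rightarrow> int" where
  "SS n \<omega> = (\<Sum>x\<in>FF n. \<Sum>i\<in>{1..N x \<omega>}. Y x i \<omega>)"

definition ExE :: "nat \<Rightarrow> int \<Rightarrow> 'a \<Rightarrow> bool" where
  "ExE n k \<omega> = (\<exists>x\<in>FF n. \<exists>i\<in>{1..N x \<omega>}. Y x i \<omega> = k)"

lemma restrict_events:
  assumes "finite I" "I \<subseteq> Idx" "G \<subseteq> PiE I (\<lambda>_. UNIV)"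
  shows "{\<omega> \<in> space M. restrict (\<lambda>j. X j \<omega>) I \<in> G} \<in> events"
proof -
  have meas: "(\<lambda>\<omega>. restrict (\<lambda>j. X j \<omega>) I) \<in> measurable M (PiM I (\<lambda>_. count_space UNIV))"
    using assms by (intro measurable_restrict rvX) auto
  have "(\<lambda>\<omega>. restrict (\<lambda>j. X j \<omega>) I) -` G \<inter> space M \<in> events"
    using measurable_sets[OF meas allsets[OF assms(1,3)]] .
  then show ?thesis by (simp add: vimage_def Int_def conj_commute)
qed

definition G1 :: "nat \<Rightarrow> (int \<Rightarrow> nat) \<Rightarrow> (int + int \<times> nat \<Rightarrow> int) set" where
  "G1 n \<nu> = {g \<in> PiE (Inl ` FF n) (\<lambda>_. UNIV). \<forall>x\<in>FF n. g (Inl x) = int (\<nu> x)}"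

lemma EN_as: "EN n \<nu> = {\<omega> \<in> space M. restrict (\<lambda>j. X j \<omega>) (Inl ` FF n) \<in> G1 n \<nu>}"
  by (auto simp: EN_def G1_def XX_def)

lemma Inl_Idx: "Inl ` FF n \<subseteq> Idx" by (auto simp: Idx_def)

lemma EN_events: "EN n \<nu> \<in> events"
  unfolding EN_as by (rule restrict_events) (auto simp: FF_finite Inl_Idx G1_def)

lemma EN_prob: "prob (EN n \<nu>) = (\<Prod>x\<in>FF n. pois lam (\<nu> x))"
proof -
  have e: "EN n \<nu> = (\<Inter>j\<in>Inl ` FF n. X j -` {int (\<nu> (projl j))} \<inter> space M)"
    using FF_ne[of n] by (auto simp: EN_def XX_def)
  have "prob (\<Inter>j\<in>Inl ` FF n. X j -` {int (\<nu> (projl j))} \<inter> space M) = (\<Prod>j\<in>Inl ` FF n. prob (X j -` {int (\<nu> (projl j))} \<inter> space M))"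
    by (rule indep_varsD[OF indep]) (use FF_ne FF_finite Inl_Idx in auto)
  then have "prob (EN n \<nu>) = (\<Prod>j\<in>Inl ` FF n. prob (X j -` {int (\<nu> (projl j))} \<inter> space M))"
    unfolding e .
  also have "\<dots> = (\<Prod>x\<in>FF n. prob (X (Inl x) -` {int (\<nu> x)} \<inter> space M))"
    by (subst prod.reindex) (auto simp: inj_on_def)
  also have "\<dots> = (\<Prod>x\<in>FF n. pois lam (\<nu> x))"
  proof (intro prod.cong refl)
    fix x
    have "X (Inl x) -` {int (\<nu> x)} \<inter> space M = {\<omega> \<in> space M. N x \<omega> = \<nu> x}" by (auto simp: XX_def)
    then show "prob (X (Inl x) -` {int (\<nu> x)} \<inter> space M) = pois lam (\<nu> x)" by (simp add: poisson pois_def)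
  qed
  finally show ?thesis .
qed

lemma EN_indep:
  assumes "G \<subseteq> PiE (Aidx n \<nu>) (\<lambda>_. UNIV)"
  shows "prob (EN n \<nu> \<inter> {\<omega> \<in> space M. restrict (\<lambda>j. X j \<omega>) (Aidx n \<nu>) \<in> G}) =
         prob (EN n \<nu>) * measure_pmf.prob (Pi_pmf (Aidx n \<nu>) 0 (\<lambda>_. p)) {f. restrict f (Aidx n \<nu>) \<in> G}"
proof -
  have "prob (EN n \<nu> \<inter> {\<omega> \<in> space M. restrict (\<lambda>j. X j \<omega>) (Aidx n \<nu>) \<in> G}) =
        prob (EN n \<nu>) * prob {\<omega> \<in> space M. restrict (\<lambda>j. X j \<omega>) (Aidx n \<nu>) \<in> G}"
    unfolding EN_as
    by (rule indep_blocks) (use assms FF_finite Aidx_finite Inl_Idx Aidx_Idx Inl_Aidx in \<open>auto simp: G1_def\<close>)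
  also have "prob {\<omega> \<in> space M. restrict (\<lambda>j. X j \<omega>) (Aidx n \<nu>) \<in> G} =
             measure_pmf.prob (Pi_pmf (Aidx n \<nu>) 0 (\<lambda>_. p)) {f. restrict f (Aidx n \<nu>) \<in> G}"
    by (rule transfer) (use assms Aidx_finite Aidx_Yidx in auto)
  finally show ?thesis .
qed

lemma sum_Aidx:
  assumes "\<omega> \<in> EN n \<nu>"
  shows "SS n \<omega> = (\<Sum>j\<in>Aidx n \<nu>. X j \<omega>)"
proof -
  have "SS n \<omega> = (\<Sum>x\<in>FF n. \<Sum>i\<in>{1..\<nu> x}. Y x i \<omega>)"
    using assms by (simp add: SS_def EN_def)
  also have "\<dots> = (\<Sum>(x, i)\<in>(SIGMA x:FF n. {1..\<nu> x}). Y x i \<omega>)"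
    by (rule sum.Sigma) (auto simp: FF_finite)
  also have "\<dots> = (\<Sum>j\<in>Aidx n \<nu>. X j \<omega>)"
    unfolding Aidx_def by (subst sum.reindex) (auto simp: XX_def case_prod_unfold)
  finally show ?thesis .
qed

lemma ex_Aidx:
  assumes "\<omega> \<in> EN n \<nu>"
  shows "ExE n k \<omega> \<longleftrightarrow> (\<exists>j\<in>Aidx n \<nu>. X j \<omega> = k)"
  using assms by (auto simp: ExE_def EN_def Aidx_def XX_def)

lemma EN_S:
  "EN n \<nu> \<inter> {\<omega> \<in> space M. SS n \<omega> = k} =
   EN n \<nu> \<inter> {\<omega> \<in> space M. restrict (\<lambda>j. X j \<omega>) (Aidx n \<nu>) \<in> {g \<in> PiE (Aidx n \<nu>) (\<lambda>_. UNIV). (\<Sum>j\<in>Aidx n \<nu>. g j) = k}}"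
  using sum_Aidx by auto

lemma EN_E:
  "EN n \<nu> \<inter> {\<omega> \<in> space M. ExE n k \<omega>} =
   EN n \<nu> \<inter> {\<omega> \<in> space M. restrict (\<lambda>j. X j \<omega>) (Aidx n \<nu>) \<in> {g \<in> PiE (Aidx n \<nu>) (\<lambda>_. UNIV). \<exists>j\<in>Aidx n \<nu>. g j = k}}"
  using ex_Aidx by auto

lemma PS_nu:
  "prob (EN n \<nu> \<inter> {\<omega> \<in> space M. SS n \<omega> = k}) =
   prob (EN n \<nu>) * measure_pmf.prob (Pi_pmf (Aidx n \<nu>) 0 (\<lambda>_. p)) {f. (\<Sum>j\<in>Aidx n \<nu>. f j) = k}"
proof -
  have "{f. restrict f (Aidx n \<nu>) \<in> {g \<in> PiE (Aidx n \<nu>) (\<lambda>_. UNIV). (\<Sum>j\<in>Aidx n \<nu>. g j) = k}} = {f. (\<Sum>j\<in>Aidx n \<nu>. f j) = k}"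
    by auto
  then show ?thesis unfolding EN_S by (subst EN_indep) auto
qed

lemma PE_nu:
  "prob (EN n \<nu> \<inter> {\<omega> \<in> space M. ExE n k \<omega>}) =
   prob (EN n \<nu>) * measure_pmf.prob (Pi_pmf (Aidx n \<nu>) 0 (\<lambda>_. p)) {f. \<exists>j\<in>Aidx n \<nu>. f j = k}"
proof -
  have "{f. restrict f (Aidx n \<nu>) \<in> {g \<in> PiE (Aidx n \<nu>) (\<lambda>_. UNIV). \<exists>j\<in>Aidx n \<nu>. g j = k}} = {f. \<exists>j\<in>Aidx n \<nu>. f j = k}"
    by auto
  then show ?thesis unfolding EN_E by (subst EN_indep) auto
qed

lemma ENS_events: "EN n \<nu> \<inter> {\<omega> \<in> space M. SS n \<omega> = k} \<in> events"
  unfolding EN_S by (intro sets.Int EN_events restrict_events) (use Aidx_finite Aidx_Idx in auto)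

lemma ENE_events: "EN n \<nu> \<inter> {\<omega> \<in> space M. ExE n k \<omega>} \<in> events"
  unfolding EN_E by (intro sets.Int EN_events restrict_events) (use Aidx_finite Aidx_Idx in auto)

lemma KK_decomp:
  assumes "B \<subseteq> space M"
  shows "{\<omega> \<in> space M. KK n \<omega> = m} \<inter> B = (\<Union>\<nu>\<in>Vset (FF n) m. EN n \<nu> \<inter> B)"
proof (intro set_eqI iffI)
  fix \<omega> assume \<omega>: "\<omega> \<in> {\<omega> \<in> space M. KK n \<omega> = m} \<inter> B"
  define \<nu> where "\<nu> = restrict (\<lambda>x. N x \<omega>) (FF n)"
  have "\<nu> \<in> Vset (FF n) m" using \<omega> by (auto simp: \<nu>_def Vset_def KK_def)
  moreover have "\<omega> \<in> EN n \<nu> \<inter> B" using \<omega> by (auto simp: \<nu>_def EN_def)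
  ultimately show "\<omega> \<in> (\<Union>\<nu>\<in>Vset (FF n) m. EN n \<nu> \<inter> B)" by auto
next
  fix \<omega> assume "\<omega> \<in> (\<Union>\<nu>\<in>Vset (FF n) m. EN n \<nu> \<inter> B)"
  then obtain \<nu> where "\<nu> \<in> Vset (FF n) m" "\<omega> \<in> EN n \<nu>" "\<omega> \<in> B" by auto
  then show "\<omega> \<in> {\<omega> \<in> space M. KK n \<omega> = m} \<inter> B"
    by (auto simp: Vset_def EN_def KK_def)
qed

lemma EN_disjoint: "disjoint_family_on (\<lambda>\<nu>. EN n \<nu> \<inter> B) (Vset (FF n) m)"
unfolding disjoint_family_on_def
proof (intro ballI impI)
  fix \<nu> \<nu>' assume a: "\<nu> \<in> Vset (FF n) m" "\<nu>' \<in> Vset (FF n) m" "\<nu> \<noteq> \<nu>'"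
  have "\<exists>x\<in>FF n. \<nu> x \<noteq> \<nu>' x"
  proof (rule ccontr)
    assume h: "\<not> (\<exists>x\<in>FF n. \<nu> x \<noteq> \<nu>' x)"
    have "\<nu> = \<nu>'"
    proof
      fix x show "\<nu> x = \<nu>' x" using h a(1,2) by (cases "x \<in> FF n") (auto simp: Vset_def PiE_def extensional_def)
    qed
    then show False using a(3) by simp
  qed
  then obtain x where "x \<in> FF n" "\<nu> x \<noteq> \<nu>' x" by blast
  then show "(EN n \<nu> \<inter> B) \<inter> (EN n \<nu>' \<inter> B) = {}" by (auto simp: EN_def)
qed

lemma prob_KK_B:
  assumes "B \<subseteq> space M" "\<And>\<nu>. EN n \<nu> \<inter> B \<in> events"
  shows "prob ({\<omega> \<in> space M. KK n \<omega> = m} \<inter> B) = (\<Sum>\<nu>\<in>Vset (FF n) m. prob (EN n \<nu> \<inter> B))"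
  unfolding KK_decomp[OF assms(1)]
  by (rule finite_measure_finite_Union) (use assms Vset_finite[OF FF_finite] EN_disjoint in auto)

lemma prob_KK: "prob {\<omega> \<in> space M. KK n \<omega> = m} = pois ((2 * real n + 1) * lam) m"
proof -
  have "prob {\<omega> \<in> space M. KK n \<omega> = m} = prob ({\<omega> \<in> space M. KK n \<omega> = m} \<inter> space M)"
    by (simp add: Int_absorb2)
  also have "\<dots> = (\<Sum>\<nu>\<in>Vset (FF n) m. prob (EN n \<nu> \<inter> space M))"
    by (rule prob_KK_B) (auto intro: EN_events)
  also have "\<dots> = (\<Sum>\<nu>\<in>Vset (FF n) m. \<Prod>x\<in>FF n. lam ^ (\<nu> x) / fact (\<nu> x) * exp (- lam))"
  proof (intro sum.cong refl)
    fix \<nu>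
    have "EN n \<nu> \<inter> space M = EN n \<nu>" by (auto simp: EN_def)
    then show "prob (EN n \<nu> \<inter> space M) = (\<Prod>x\<in>FF n. lam ^ (\<nu> x) / fact (\<nu> x) * exp (- lam))"
      by (simp add: EN_prob pois_def)
  qed
  also have "\<dots> = (\<Sum>\<nu>\<in>Vset (FF n) m. (\<Prod>x\<in>FF n. lam ^ (\<nu> x) / fact (\<nu> x)) * exp (- lam) ^ card (FF n))"
    by (intro sum.cong refl, subst prod.distrib) simp
  also have "\<dots> = (real (card (FF n)) * lam) ^ m / fact m * exp (- lam) ^ card (FF n)"
    by (simp add: sum_distrib_right[symmetric] multinomial_weights FF_finite)
  also have "\<dots> = pois ((2 * real n + 1) * lam) m"
  proof -
    have "exp (- lam) ^ card (FF n) = exp (- ((2 * real n + 1) * lam))"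
      by (simp add: FF_card exp_of_nat_mult[symmetric] exp_add[symmetric] algebra_simps)
    then show ?thesis by (simp add: pois_def FF_card add.commute)
  qed
  finally show ?thesis .
qed

end




lemma exp_sums_real: "(\<lambda>n. x ^ n / fact n) sums exp (x::real)"
  using exp_converges[of x] by (simp add: divide_inverse mult.commute scaleR_conv_of_real)

lemma pois_sums_gen: "(\<lambda>m. pois l m * z ^ m) sums exp (l * (z - 1))"
proof -
  have "(\<lambda>m. exp (- l) * ((l * z) ^ m / fact m)) sums (exp (- l) * exp (l * z))"
    by (intro sums_mult exp_sums_real)
  moreover have "exp (- l) * exp (l * z) = exp (l * (z - 1))" by (simp add: exp_add[symmetric] algebra_simps)
  ultimately show ?thesis by (simp add: pois_def power_mult_distrib algebra_simps)
qed

lemma pois_sums1: "(\<lambda>m. pois l m) sums 1"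
  using pois_sums_gen[of l 1] by simp

lemma pois_Suc: "pois l (Suc n) * real (Suc n) = l * pois l n"
proof -
  have f: "(fact (Suc n)::real) = real (Suc n) * fact n" by simp
  have "pois l (Suc n) * real (Suc n) = l ^ Suc n * exp (-l) * (real (Suc n) / fact (Suc n))" by (simp add: pois_def)
  also have "real (Suc n) / fact (Suc n) = 1 / (fact n :: real)" unfolding f by (simp del: of_nat_Suc)
  finally show ?thesis by (simp add: pois_def)
qed

lemma pois_sums_m: "(\<lambda>m. pois l m * real m) sums l"
proof -
  have "(\<lambda>n. pois l (Suc n) * real (Suc n)) sums (l * 1)"
    unfolding pois_Suc by (intro sums_mult pois_sums1)
  from sums_Suc_iff[THEN iffD1, OF this] show ?thesis by simp
qed

lemma pois_sums_m2: "(\<lambda>m. pois l m * (real m)^2) sums (l^2 + l)"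
proof -
  have "(\<lambda>n. l * (pois l n * real n + pois l n)) sums (l * (l + 1))"
    by (intro sums_mult sums_add pois_sums_m pois_sums1)
  moreover have "pois l (Suc n) * (real (Suc n))^2 = l * (pois l n * real n + pois l n)" for n
  proof -
    have "pois l (Suc n) * (real (Suc n))^2 = (pois l (Suc n) * real (Suc n)) * real (Suc n)"
      by (simp add: power2_eq_square)
    also have "\<dots> = l * pois l n * real (Suc n)" by (simp only: pois_Suc)
    finally show ?thesis by (simp add: algebra_simps)
  qed
  ultimately have "(\<lambda>n. pois l (Suc n) * (real (Suc n))^2) sums (l * (l + 1))" by simp
  from sums_Suc_iff[THEN iffD1, OF this] show ?thesis by (simp add: algebra_simps power2_eq_square)
qed

lemma pois_nonneg: "0 \<le> l \<Longrightarrow> 0 \<le> pois l m"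
  by (simp add: pois_def)

lemma Pi_pmf_exists:
  assumes "finite A"
  shows "measure_pmf.prob (Pi_pmf A 0 (\<lambda>_. q)) {f. \<exists>a\<in>A. f a = k} = 1 - (1 - pmf q k) ^ card A"
proof -
  have "{f. \<exists>a\<in>A. f a = k} = UNIV - {f. \<forall>a\<in>A. f a \<in> UNIV - {k}}" by auto
  then have "measure_pmf.prob (Pi_pmf A 0 (\<lambda>_. q)) {f. \<exists>a\<in>A. f a = k} = 1 - measure_pmf.prob (Pi_pmf A 0 (\<lambda>_. q)) {f. \<forall>a\<in>A. f a \<in> UNIV - {k}}"
    using measure_pmf.prob_compl[where M="Pi_pmf A 0 (\<lambda>_. q)" and A="{f. \<forall>a\<in>A. f a \<in> UNIV - {k}}"] by simp
  also have "{f. \<forall>a\<in>A. f a \<in> UNIV - {k}} = Pi A (\<lambda>_. UNIV - {k})" by (auto simp: Pi_def)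
  also have "measure_pmf.prob (Pi_pmf A 0 (\<lambda>_. q)) (Pi A (\<lambda>_. UNIV - {k})) = (\<Prod>a\<in>A. measure_pmf.prob q (UNIV - {k}))"
    by (rule measure_Pi_pmf_Pi[OF assms])
  also have "\<dots> = (1 - pmf q k) ^ card A"
    using measure_pmf.prob_compl[where M=q and A="{k}"] by (simp add: measure_pmf_single)
  finally show ?thesis .
qed

context model
begin

lemma KK_partition:
  assumes "B \<subseteq> space M" "\<And>\<nu>. EN n \<nu> \<inter> B \<in> events"
  shows "(\<lambda>m. prob ({\<omega> \<in> space M. KK n \<omega> = m} \<inter> B)) sums prob B"
proof -
  have ev: "{\<omega> \<in> space M. KK n \<omega> = m} \<inter> B \<in> events" for m
    unfolding KK_decomp[OF assms(1)]
    by (intro sets.finite_UN) (use assms Vset_finite[OF FF_finite] in auto)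
  have "(\<lambda>m. prob ({\<omega> \<in> space M. KK n \<omega> = m} \<inter> B)) sums prob (\<Union>m. {\<omega> \<in> space M. KK n \<omega> = m} \<inter> B)"
    by (rule finite_measure_UNION) (use ev in \<open>auto simp: disjoint_family_on_def\<close>)
  moreover have "(\<Union>m. {\<omega> \<in> space M. KK n \<omega> = m} \<inter> B) = B" using assms(1) by auto
  ultimately show ?thesis by simp
qed

lemma prob_KK_S:
  "prob ({\<omega> \<in> space M. KK n \<omega> = m} \<inter> {\<omega> \<in> space M. SS n \<omega> = k}) =
   (\<Sum>\<nu>\<in>Vset (FF n) m. prob (EN n \<nu>) * measure_pmf.prob (Pi_pmf (Aidx n \<nu>) 0 (\<lambda>_. p)) {f. (\<Sum>j\<in>Aidx n \<nu>. f j) = k})"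
  by (subst prob_KK_B) (auto simp: PS_nu ENS_events)

lemma prob_KK_E:
  "prob ({\<omega> \<in> space M. KK n \<omega> = m} \<inter> {\<omega> \<in> space M. ExE n k \<omega>}) = pois ((2 * real n + 1) * lam) m * (1 - (1 - pmf p k) ^ m)"
proof -
  have "prob ({\<omega> \<in> space M. KK n \<omega> = m} \<inter> {\<omega> \<in> space M. ExE n k \<omega>}) =
        (\<Sum>\<nu>\<in>Vset (FF n) m. prob (EN n \<nu>) * (1 - (1 - pmf p k) ^ m))"
  proof (subst prob_KK_B)
    show "(\<Sum>\<nu>\<in>Vset (FF n) m. prob (EN n \<nu> \<inter> {\<omega> \<in> space M. ExE n k \<omega>})) = (\<Sum>\<nu>\<in>Vset (FF n) m. prob (EN n \<nu>) * (1 - (1 - pmf p k) ^ m))"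
    proof (intro sum.cong refl)
      fix \<nu> assume "\<nu> \<in> Vset (FF n) m"
      then have "card (Aidx n \<nu>) = m" by (simp add: Aidx_card Vset_def)
      then show "prob (EN n \<nu> \<inter> {\<omega> \<in> space M. ExE n k \<omega>}) = prob (EN n \<nu>) * (1 - (1 - pmf p k) ^ m)"
        by (simp add: PE_nu Pi_pmf_exists Aidx_finite)
    qed
  qed (auto intro: ENE_events)
  also have "\<dots> = (\<Sum>\<nu>\<in>Vset (FF n) m. prob (EN n \<nu> \<inter> space M)) * (1 - (1 - pmf p k) ^ m)"
    by (simp add: sum_distrib_right Int_absorb2 EN_def)
  also have "(\<Sum>\<nu>\<in>Vset (FF n) m. prob (EN n \<nu> \<inter> space M)) = prob ({\<omega> \<in> space M. KK n \<omega> = m} \<inter> space M)"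
    by (subst prob_KK_B) (auto intro: EN_events)
  also have "\<dots> = pois ((2 * real n + 1) * lam) m"
    by (simp add: Int_absorb2 prob_KK)
  finally show ?thesis .
qed

lemma prob_E:
  "prob {\<omega> \<in> space M. ExE n k \<omega>} = 1 - exp (- ((2 * real n + 1) * lam) * pmf p k)"
proof -
  let ?l = "(2 * real n + 1) * lam"
  have "(\<lambda>m. prob ({\<omega> \<in> space M. KK n \<omega> = m} \<inter> {\<omega> \<in> space M. ExE n k \<omega>})) sums prob {\<omega> \<in> space M. ExE n k \<omega>}"
    by (rule KK_partition) (auto intro: ENE_events)
  moreover have "(\<lambda>m. pois ?l m * (1 - (1 - pmf p k) ^ m)) sums (1 - exp (?l * ((1 - pmf p k) - 1)))"
    using sums_diff[OF pois_sums1 pois_sums_gen[of ?l "1 - pmf p k"]] by (simp add: algebra_simps)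
  ultimately show ?thesis using sums_unique2 by (fastforce simp: prob_KK_E algebra_simps)
qed

end


locale both = model M N Y lam p + heavy p \<alpha> Z
  for M :: "'a measure" and N Y lam p \<alpha> Z
begin

definition EEh :: "real \<Rightarrow> real \<Rightarrow> real" where
  "EEh h L = measure_pmf.expectation p (\<lambda>y. exp (h * trr L y))"

definition Bd :: "int \<Rightarrow> real \<Rightarrow> real \<Rightarrow> real \<Rightarrow> nat \<Rightarrow> real" where
  "Bd k L s h m = exp (- h * real_of_int k) * (EEh h L) ^ m + 2 * (real m)^2 * supb L * tl L
     + Kc k L * pmf p k * ((real m)^2 * sig2 L / s + real m * s) / (2 * real_of_int k)"

lemma B1:
  assumes k: "0 < k" and L: "0 < L" "2 * L < real_of_int k" and s: "0 < s" and h: "0 \<le> h"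
  shows "\<bar>prob ({\<omega> \<in> space M. KK n \<omega> = m} \<inter> {\<omega> \<in> space M. SS n \<omega> = k}) - pois ((2 * real n + 1) * lam) m * (real m * pmf p k)\<bar>
         \<le> pois ((2 * real n + 1) * lam) m * Bd k L s h m"
proof -
  let ?R = "\<lambda>\<nu>. measure_pmf.prob (Pi_pmf (Aidx n \<nu>) 0 (\<lambda>_. p)) {f. (\<Sum>j\<in>Aidx n \<nu>. f j) = k}"
  have pk: "pois ((2 * real n + 1) * lam) m = (\<Sum>\<nu>\<in>Vset (FF n) m. prob (EN n \<nu>))"
  proof -
    have "(\<Sum>\<nu>\<in>Vset (FF n) m. prob (EN n \<nu>)) = (\<Sum>\<nu>\<in>Vset (FF n) m. prob (EN n \<nu> \<inter> space M))"
      by (intro sum.cong refl) (simp add: Int_absorb2 EN_def)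
    also have "\<dots> = prob ({\<omega> \<in> space M. KK n \<omega> = m} \<inter> space M)"
      by (subst prob_KK_B) (auto intro: EN_events)
    finally show ?thesis by (simp add: Int_absorb2 prob_KK)
  qed
  have Rb: "\<bar>?R \<nu> - real m * pmf p k\<bar> \<le> Bd k L s h m" if "\<nu> \<in> Vset (FF n) m" for \<nu>
  proof -
    have c: "card (Aidx n \<nu>) = m" using that by (simp add: Aidx_card Vset_def)
    show ?thesis
      using core_main[OF Aidx_finite k L s h, of n \<nu>] c by (simp add: PP_def Bd_def EEh_def)
  qed
  have "prob ({\<omega> \<in> space M. KK n \<omega> = m} \<inter> {\<omega> \<in> space M. SS n \<omega> = k}) - pois ((2 * real n + 1) * lam) m * (real m * pmf p k)
        = (\<Sum>\<nu>\<in>Vset (FF n) m. prob (EN n \<nu>) * (?R \<nu> - real m * pmf p k))"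
    by (simp add: prob_KK_S pk sum_distrib_right right_diff_distrib sum_subtractf)
  also have "\<bar>\<dots>\<bar> \<le> (\<Sum>\<nu>\<in>Vset (FF n) m. \<bar>prob (EN n \<nu>) * (?R \<nu> - real m * pmf p k)\<bar>)"
    by (rule sum_abs)
  also have "\<dots> \<le> (\<Sum>\<nu>\<in>Vset (FF n) m. prob (EN n \<nu>) * Bd k L s h m)"
    by (intro sum_mono) (simp add: abs_mult Rb mult_left_mono)
  also have "\<dots> = pois ((2 * real n + 1) * lam) m * Bd k L s h m"
    by (simp add: pk sum_distrib_right)
  finally show ?thesis .
qed

definition CF :: "real \<Rightarrow> int \<Rightarrow> real \<Rightarrow> real \<Rightarrow> real \<Rightarrow> real" where
  "CF \<mu> k L s h = exp (- h * real_of_int k) * exp (\<mu> * (EEh h L - 1)) + 2 * supb L * tl L * (\<mu>^2 + \<mu>)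
     + Kc k L * pmf p k / (2 * real_of_int k) * (sig2 L / s * (\<mu>^2 + \<mu>) + s * \<mu>)"

lemma Bd_sums: "(\<lambda>m. pois \<mu> m * Bd k L s h m) sums CF \<mu> k L s h"
proof -
  have "(\<lambda>m. exp (- h * real_of_int k) * (pois \<mu> m * (EEh h L) ^ m) + 2 * supb L * tl L * (pois \<mu> m * (real m)^2)
          + Kc k L * pmf p k / (2 * real_of_int k) * (sig2 L / s * (pois \<mu> m * (real m)^2) + s * (pois \<mu> m * real m)))
        sums (exp (- h * real_of_int k) * exp (\<mu> * (EEh h L - 1)) + 2 * supb L * tl L * (\<mu>^2 + \<mu>)
          + Kc k L * pmf p k / (2 * real_of_int k) * (sig2 L / s * (\<mu>^2 + \<mu>) + s * \<mu>))"
    by (intro sums_add sums_mult pois_sums_gen pois_sums_m2 pois_sums_m)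
  moreover have "pois \<mu> m * Bd k L s h m = exp (- h * real_of_int k) * (pois \<mu> m * (EEh h L) ^ m) + 2 * supb L * tl L * (pois \<mu> m * (real m)^2)
          + Kc k L * pmf p k / (2 * real_of_int k) * (sig2 L / s * (pois \<mu> m * (real m)^2) + s * (pois \<mu> m * real m))" for m
    by (simp add: Bd_def field_simps)
  ultimately show ?thesis by (simp add: CF_def)
qed

lemma B2:
  assumes k: "0 < k" and L: "0 < L" "2 * L < real_of_int k" and s: "0 < s" and h: "0 \<le> h"
  shows "\<bar>prob {\<omega> \<in> space M. SS n \<omega> = k} - (2 * real n + 1) * lam * pmf p k\<bar> \<le> CF ((2 * real n + 1) * lam) k L s h"
proof -
  let ?\<mu> = "(2 * real n + 1) * lam"
  let ?a = "\<lambda>m. prob ({\<omega> \<in> space M. KK n \<omega> = m} \<inter> {\<omega> \<in> space M. SS n \<omega> = k})"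
  let ?b = "\<lambda>m. pois ?\<mu> m * (real m * pmf p k)"
  let ?c = "\<lambda>m. pois ?\<mu> m * Bd k L s h m"
  have a: "?a sums prob {\<omega> \<in> space M. SS n \<omega> = k}"
    by (rule KK_partition) (auto intro: ENS_events)
  have b: "?b sums (?\<mu> * pmf p k)"
    using sums_mult2[OF pois_sums_m[of ?\<mu>], of "pmf p k"] by (simp add: mult.assoc)
  have c: "?c sums CF ?\<mu> k L s h" by (rule Bd_sums)
  have ab: "(\<lambda>m. ?a m - ?b m) sums (prob {\<omega> \<in> space M. SS n \<omega> = k} - ?\<mu> * pmf p k)"
    by (rule sums_diff[OF a b])
  have le: "\<bar>?a m - ?b m\<bar> \<le> ?c m" for m by (rule B1[OF k L s h])
  have "prob {\<omega> \<in> space M. SS n \<omega> = k} - ?\<mu> * pmf p k \<le> CF ?\<mu> k L s h"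
    by (rule sums_le[OF _ ab c]) (use le in \<open>auto simp: abs_le_iff\<close>)
  moreover have "- (prob {\<omega> \<in> space M. SS n \<omega> = k} - ?\<mu> * pmf p k) \<le> CF ?\<mu> k L s h"
    by (rule sums_le[OF _ sums_minus[OF ab] c]) (use le in \<open>auto simp: abs_le_iff\<close>)
  ultimately show ?thesis by (simp add: abs_le_iff)
qed

end




lemma exp_le_quad:
  fixes x :: real
  assumes "\<bar>x\<bar> \<le> 1"
  shows "exp x \<le> 1 + x + x^2"
proof (cases "0 \<le> x")
  case True then show ?thesis using assms exp_bound[of x] by simp
next
  case False
  define t where "t = - x"
  have t: "0 < t" "t \<le> 1" using False assms by (auto simp: t_def)
  have "exp x = 1 / exp t" by (simp add: t_def exp_minus field_simps)
  also have "\<dots> \<le> 1 / (1 + t)"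
    using t by (intro divide_left_mono) (auto simp: exp_ge_add_one_self add_pos_pos)
  also have "\<dots> \<le> 1 - t + t^2"
  proof -
    have "1 \<le> (1 + t) * (1 - t + t^2)" using t by (simp add: algebra_simps power2_eq_square power3_eq_cube)
    then show ?thesis using t by (simp add: field_simps)
  qed
  finally show ?thesis by (simp add: t_def)
qed

lemma exp_minus_lin_le:
  fixes x B :: real
  assumes "\<bar>x\<bar> \<le> B"
  shows "exp x - 1 - x \<le> exp B"
proof (cases "0 \<le> x")
  case True
  then have "exp x \<le> exp B" using assms by simp
  then show ?thesis using True by linarith
next
  case False
  then have "exp x \<le> 1" by simp
  moreover have "- x \<le> B" using assms by simp
  moreover have "B \<le> exp B" using exp_ge_add_one_self[of B] by linarith
  ultimately show ?thesis by linarith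
qed

lemma ln_le_powr:
  fixes K \<epsilon> :: real
  assumes "1 \<le> K" "0 < \<epsilon>"
  shows "ln K \<le> K powr \<epsilon> / \<epsilon>"
proof -
  have "ln (K powr \<epsilon>) \<le> K powr \<epsilon> - 1" using assms by (intro ln_le_minus_one) auto
  then have "\<epsilon> * ln K \<le> K powr \<epsilon>" using assms by (simp add: ln_powr)
  then show ?thesis using assms by (simp add: field_simps)
qed

context heavy
begin

lemma EEh_bound:
  assumes h: "0 < h" and L: "0 < L"
  shows "measure_pmf.expectation p (\<lambda>y. exp (h * trr L y)) \<le> 1 + h^2 * sig2 L + exp (h * L) * tl (1 / h)"
proof -
  let ?g = "\<lambda>y. exp (h * trr L y) - 1 - h * trr L y"
  let ?u = "\<lambda>y. h^2 * (trr L y)^2 + exp (h * L) * indicator {y. 1 / h < \<bar>real_of_int y\<bar>} y"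
  have tb: "\<bar>trr L y\<bar> \<le> L" for y using trr_bound[of L y] L by simp
  have int_trr: "integrable (measure_pmf p) (trr L)"
    by (intro measure_pmf.integrable_const_bound[where B=L] AE_I2) (use tb in auto)
  have int_exp: "integrable (measure_pmf p) (\<lambda>y. exp (h * trr L y))"
  proof (intro measure_pmf.integrable_const_bound[where B="exp (h * L)"] AE_I2)
    fix y have "h * trr L y \<le> h * L" using tb[of y] h by (intro mult_left_mono) auto
    then show "norm (exp (h * trr L y)) \<le> exp (h * L)" by simp
  qed simp
  have int_trr2: "integrable (measure_pmf p) (\<lambda>y. (trr L y)^2)"
  proof (intro measure_pmf.integrable_const_bound[where B="L^2"] AE_I2)
    fix y show "norm ((trr L y)^2) \<le> L^2" using tb[of y] L abs_le_square_iff[of "trr L y" L] by simp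
  qed simp
  have int_ind: "integrable (measure_pmf p) (indicator {y. 1 / h < \<bar>real_of_int y\<bar>} :: int \<Rightarrow> real)"
    by (intro measure_pmf.integrable_const_bound[where B=1] AE_I2) auto
  have pw: "?g y \<le> ?u y" for y
  proof (cases "\<bar>trr L y\<bar> \<le> 1 / h")
    case True
    then have "\<bar>h * trr L y\<bar> \<le> 1" using h by (simp add: abs_mult field_simps)
    then have "?g y \<le> (h * trr L y)^2" using exp_le_quad[of "h * trr L y"] by simp
    moreover have "0 \<le> exp (h * L) * indicator {y. 1 / h < \<bar>real_of_int y\<bar>} y" by simp
    moreover have "(h * trr L y)^2 = h^2 * (trr L y)^2" by (simp add: power_mult_distrib)
    ultimately show ?thesis by linarith
  next
    case False
    then have "trr L y = real_of_int y" using h by (auto simp: trr_def split: if_splits)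
    then have ind: "indicator {y. 1 / h < \<bar>real_of_int y\<bar>} y = (1::real)" using False by simp
    have "\<bar>h * trr L y\<bar> \<le> h * L" using tb[of y] h by (simp add: abs_mult)
    then have "?g y \<le> exp (h * L)" by (rule exp_minus_lin_le)
    moreover have "0 \<le> h^2 * (trr L y)^2" by simp
    ultimately show ?thesis unfolding ind mult_1_right by linarith
  qed
  have "measure_pmf.expectation p (\<lambda>y. exp (h * trr L y)) = 1 + h * measure_pmf.expectation p (trr L) + measure_pmf.expectation p ?g"
    using int_exp int_trr by simp
  also have "\<dots> = 1 + measure_pmf.expectation p ?g" by (simp add: expectation_trr)
  also have "measure_pmf.expectation p ?g \<le> measure_pmf.expectation p ?u"
    by (intro Bochner_Integration.integral_mono pw) (use int_exp int_trr int_trr2 int_ind in auto)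
  also have "measure_pmf.expectation p ?u = h^2 * sig2 L + exp (h * L) * tl (1 / h)"
  proof -
    have "measure_pmf.expectation p ?u = h^2 * measure_pmf.expectation p (\<lambda>y. (trr L y)^2) + exp (h * L) * measure_pmf.expectation p (indicator {y. 1 / h < \<bar>real_of_int y\<bar>})"
      using int_trr2 int_ind by simp
    then show ?thesis by (simp add: sig2_def tl_def)
  qed
  finally show ?thesis by simp
qed

end


context heavy
begin

definition thT :: real where "thT = min (\<alpha> - 1) 1 / 2"
definition rhoT :: real where "rhoT = (\<alpha> - 1) / 4"
definition delT :: real where "delT = rhoT / (2 + \<alpha>)"
definition apT :: real where "apT = (1 + \<alpha>) / 2"

lemma thT_pos: "0 < thT" using alpha_gt by (simp add: thT_def)
lemma thT_le: "thT \<le> 1/2" by (simp add: thT_def)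
lemma thT_lt: "1 + thT < \<alpha>"
proof -
  define t where "t = min (\<alpha> - 1) 1"
  have "t \<le> \<alpha> - 1" by (simp add: t_def)
  then have "1 + t / 2 < \<alpha>" using alpha_gt by linarith
  then show ?thesis by (simp add: thT_def t_def)
qed
lemma thT_le_rho: "thT / 2 \<le> 2 * rhoT" using alpha_gt by (simp add: thT_def rhoT_def min_def)
lemma rhoT_pos: "0 < rhoT" using alpha_gt by (simp add: rhoT_def)
lemma delT_pos: "0 < delT" using alpha_gt rhoT_pos by (simp add: delT_def)
lemma delT_le: "delT \<le> 1/4" using alpha_gt by (simp add: delT_def rhoT_def field_simps)
lemma apT_pos: "0 < apT" using alpha_gt by (simp add: apT_def)
lemma apT_lt: "apT < \<alpha>" using alpha_gt by (simp add: apT_def)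
lemma apT_rho: "1 + rhoT - apT = - rhoT" by (simp add: apT_def rhoT_def field_simps)
lemma apT_rho2: "1 - apT = - 2 * rhoT" by (simp add: apT_def rhoT_def field_simps)
lemma delT_rho: "rhoT / delT = 2 + \<alpha>" using alpha_gt rhoT_pos by (simp add: delT_def field_simps)

definition mom1 :: real where "mom1 = mom (1 + thT)"
definition mom2 :: real where "mom2 = mom apT"

lemma sig2_le: "0 < L \<Longrightarrow> sig2 L \<le> L powr (1 - thT) * mom1"
  unfolding mom1_def by (rule sig2_bound) (use thT_pos thT_le thT_lt in auto)

lemma tl_le: "0 < L \<Longrightarrow> tl L \<le> mom2 * L powr (- apT)"
  using tl_markov[of L apT] apT_pos apT_lt by (simp add: mom2_def powr_minus divide_inverse)

definition B0 :: "real \<Rightarrow> real" where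
  "B0 a = a * rhoT^2 * mom1 * delT powr (-1 - thT) * (2 / thT)^2 + a * mom2 * rhoT powr apT * delT powr (- apT) * (apT / rhoT) powr apT"

lemma A2:
  fixes K \<mu> a :: real
  assumes K: "1 < K" and \<mu>: "0 \<le> \<mu>" "\<mu> \<le> a * K" and a: "0 \<le> a"
  defines "LK \<equiv> delT * K" and "hK \<equiv> rhoT * ln K / (delT * K)"
  shows "\<mu> * (measure_pmf.expectation p (\<lambda>y. exp (hK * trr LK y)) - 1) \<le> B0 a"
proof -
  have lnK: "0 < ln K" using K by simp
  have Lp: "0 < LK" using K delT_pos by (simp add: LK_def)
  have hp: "0 < hK" using K delT_pos rhoT_pos lnK by (simp add: hK_def)
  have hL: "hK * LK = rhoT * ln K" using Lp delT_pos K by (simp add: hK_def LK_def field_simps)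
  have eK: "exp (hK * LK) = K powr rhoT" using K by (simp add: hL powr_def)
  have m1: "0 \<le> mom1" by (simp add: mom1_def mom_nonneg)
  have m2: "0 \<le> mom2" by (simp add: mom2_def mom_nonneg)
  have EE: "measure_pmf.expectation p (\<lambda>y. exp (hK * trr LK y)) - 1 \<le> hK^2 * (LK powr (1 - thT) * mom1) + K powr rhoT * (mom2 * (1 / hK) powr (- apT))"
  proof -
    have "measure_pmf.expectation p (\<lambda>y. exp (hK * trr LK y)) \<le> 1 + hK^2 * sig2 LK + exp (hK * LK) * tl (1 / hK)"
      by (rule EEh_bound[OF hp Lp])
    moreover have "hK^2 * sig2 LK \<le> hK^2 * (LK powr (1 - thT) * mom1)"
      using sig2_le[OF Lp] by (intro mult_left_mono) auto
    moreover have "exp (hK * LK) * tl (1 / hK) \<le> K powr rhoT * (mom2 * (1 / hK) powr (- apT))"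
      unfolding eK using tl_le[of "1/hK"] hp by (intro mult_left_mono) auto
    ultimately show ?thesis by linarith
  qed
  have T1: "\<mu> * (hK^2 * (LK powr (1 - thT) * mom1)) \<le> a * rhoT^2 * mom1 * delT powr (-1 - thT) * (2 / thT)^2"
  proof -
    have e1: "hK^2 * LK powr (1 - thT) = (rhoT * ln K)^2 * (delT powr (-1 - thT) * K powr (-1 - thT))"
    proof -
      have "hK^2 * LK powr (1 - thT) = (rhoT * ln K)^2 * (LK powr (1 - thT) / LK powr 2)"
        using Lp by (simp add: hK_def LK_def power2_eq_square powr_numeral)
      also have "LK powr (1 - thT) / LK powr 2 = LK powr (-1 - thT)"
      proof -
        have "LK powr (-1 - thT) = LK powr ((1 - thT) - 2)" by simp
        also have "\<dots> = LK powr (1 - thT) / LK powr 2" by (rule powr_diff)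
        finally show ?thesis by simp
      qed
      also have "\<dots> = delT powr (-1 - thT) * K powr (-1 - thT)"
        using delT_pos K by (simp add: LK_def powr_mult)
      finally show ?thesis .
    qed
    have lnb: "(ln K)^2 \<le> (2 / thT)^2 * K powr thT"
    proof -
      have "ln K \<le> K powr (thT/2) / (thT/2)" using K thT_pos by (intro ln_le_powr) auto
      then have "(ln K)^2 \<le> (K powr (thT/2) / (thT/2))^2" using lnK by (intro power_mono) auto
      also have "\<dots> = (2 / thT)^2 * (K powr (thT/2))^2" by (simp add: field_simps)
      also have "(K powr (thT/2))^2 = K powr thT" using K by (simp add: powr_powr[symmetric] powr_realpow[symmetric] power2_eq_square powr_add[symmetric])
      finally show ?thesis .
    qed
    have "\<mu> * (hK^2 * (LK powr (1 - thT) * mom1)) \<le> (a * K) * (hK^2 * (LK powr (1 - thT) * mom1))"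
      using \<mu> m1 Lp by (intro mult_right_mono) auto
    also have "\<dots> = a * rhoT^2 * mom1 * delT powr (-1 - thT) * ((ln K)^2 * (K * K powr (-1 - thT)))"
      using e1 by (simp add: algebra_simps power_mult_distrib)
    also have "K * K powr (-1 - thT) = K powr (- thT)"
    proof -
      have "K * K powr (-1 - thT) = K powr 1 * K powr (-1 - thT)" using K by simp
      also have "\<dots> = K powr (1 + (-1 - thT))" by (rule powr_add[symmetric])
      finally show ?thesis by simp
    qed
    also have "(ln K)^2 * K powr (- thT) \<le> (2 / thT)^2"
    proof -
      have "(ln K)^2 * K powr (- thT) \<le> ((2 / thT)^2 * K powr thT) * K powr (- thT)"
        using lnb by (intro mult_right_mono) auto
      also have "\<dots> = (2 / thT)^2" using K by (simp add: powr_minus field_simps)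
      finally show ?thesis .
    qed
    then have "a * rhoT^2 * mom1 * delT powr (-1 - thT) * ((ln K)^2 * K powr (- thT)) \<le> a * rhoT^2 * mom1 * delT powr (-1 - thT) * (2 / thT)^2"
      using a m1 by (intro mult_left_mono) auto
    finally show ?thesis .
  qed
  have T2: "\<mu> * (K powr rhoT * (mom2 * (1 / hK) powr (- apT))) \<le> a * mom2 * rhoT powr apT * delT powr (- apT) * (apT / rhoT) powr apT"
  proof -
    have e2: "(1 / hK) powr (- apT) = rhoT powr apT * (ln K) powr apT * delT powr (- apT) * K powr (- apT)"
    proof -
      have "(1 / hK) powr (- apT) = hK powr apT" using hp by (simp add: powr_minus_divide powr_divide)
      also have "\<dots> = (rhoT * ln K) powr apT / (delT * K) powr apT"
        using hp lnK rhoT_pos delT_pos K by (simp add: hK_def powr_divide)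
      also have "\<dots> = rhoT powr apT * (ln K) powr apT * delT powr (- apT) * K powr (- apT)"
        using lnK rhoT_pos delT_pos K by (simp add: powr_mult powr_minus divide_inverse)
      finally show ?thesis .
    qed
    have lnb: "(ln K) powr apT \<le> (apT / rhoT) powr apT * K powr rhoT"
    proof -
      have "ln K \<le> K powr (rhoT/apT) / (rhoT/apT)" using K rhoT_pos apT_pos by (intro ln_le_powr) auto
      then have "(ln K) powr apT \<le> (K powr (rhoT/apT) / (rhoT/apT)) powr apT"
        using lnK apT_pos by (intro powr_mono2) auto
      also have "\<dots> = (apT / rhoT) powr apT * K powr rhoT"
      proof -
        have "(K powr (rhoT/apT) / (rhoT/apT)) powr apT = (K powr (rhoT/apT)) powr apT / (rhoT/apT) powr apT"
          using K rhoT_pos apT_pos by (subst powr_divide) auto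
        also have "(K powr (rhoT/apT)) powr apT = K powr rhoT" using apT_pos by (simp add: powr_powr)
        also have "(rhoT/apT) powr apT = 1 / (apT / rhoT) powr apT"
          using rhoT_pos apT_pos by (simp add: powr_divide)
        finally show ?thesis by simp
      qed
      finally show ?thesis .
    qed
    have "\<mu> * (K powr rhoT * (mom2 * (1 / hK) powr (- apT))) \<le> (a * K) * (K powr rhoT * (mom2 * (1 / hK) powr (- apT)))"
      using \<mu> m2 by (intro mult_right_mono) auto
    also have "\<dots> = a * mom2 * rhoT powr apT * delT powr (- apT) * ((ln K) powr apT * (K * K powr rhoT * K powr (- apT)))"
      unfolding e2 by (simp add: algebra_simps)
    also have "K * K powr rhoT * K powr (- apT) = K powr (- rhoT)"
    proof -
      have "K * K powr rhoT * K powr (- apT) = K powr (1 + rhoT - apT)"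
        using K by (simp add: powr_add powr_diff powr_minus field_simps)
      then show ?thesis by (simp add: apT_rho)
    qed
    also have "(ln K) powr apT * K powr (- rhoT) \<le> (apT / rhoT) powr apT"
    proof -
      have "(ln K) powr apT * K powr (- rhoT) \<le> ((apT / rhoT) powr apT * K powr rhoT) * K powr (- rhoT)"
        using lnb by (intro mult_right_mono) auto
      also have "\<dots> = (apT / rhoT) powr apT" using K by (simp add: powr_minus field_simps)
      finally show ?thesis .
    qed
    then have "a * mom2 * rhoT powr apT * delT powr (- apT) * ((ln K) powr apT * K powr (- rhoT)) \<le> a * mom2 * rhoT powr apT * delT powr (- apT) * (apT / rhoT) powr apT"
      using a m2 by (intro mult_left_mono) auto
    finally show ?thesis .
  qed
  have "\<mu> * (measure_pmf.expectation p (\<lambda>y. exp (hK * trr LK y)) - 1) \<le> \<mu> * (hK^2 * (LK powr (1 - thT) * mom1) + K powr rhoT * (mom2 * (1 / hK) powr (- apT)))"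
    using EE \<mu> by (intro mult_left_mono) auto
  also have "\<dots> \<le> B0 a" using T1 T2 by (simp add: B0_def distrib_left)
  finally show ?thesis .
qed

end


context both
begin

definition C1 :: "real \<Rightarrow> real" where "C1 a = exp (B0 a) * (2 * Z) / lam"
definition C2 :: "real \<Rightarrow> real" where "C2 a = 2 * delT powr (-(1+\<alpha>)) * mom2 * delT powr (- apT) * (1 + 1 / lam) * a"
definition KcC :: real where "KcC = (1+\<alpha>) * 2 powr (2+\<alpha>) + 2 + 2 * (1 / delT) powr (1+\<alpha>)"
definition C3 :: "real \<Rightarrow> real" where "C3 a = KcC / 2 * (mom1 * (1 + 1 / lam) * a + 1)"

lemma pk_formula: "0 < k \<Longrightarrow> pmf p k = real_of_int k powr (-(1+\<alpha>)) / (2 * Z)"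
  by (simp add: pmf_p)

lemma CF_bound:
  fixes k :: int and \<mu> a :: real
  assumes K: "1 < real_of_int k" and \<mu>: "lam \<le> \<mu>" "\<mu> \<le> a * real_of_int k" and a: "0 \<le> a"
  shows "CF \<mu> k (delT * real_of_int k) (real_of_int k powr (1 - thT/2)) (rhoT * ln (real_of_int k) / (delT * real_of_int k))
         \<le> \<mu> * pmf p k * (C1 a * real_of_int k powr (-1) + C2 a * real_of_int k powr (- 2 * rhoT) + C3 a * real_of_int k powr (- thT / 2))"
proof -
  define K where "K = real_of_int k"
  define L where "L = delT * K"
  define s where "s = K powr (1 - thT/2)"
  define h where "h = rhoT * ln K / (delT * K)"
  have Kp: "0 < K" "1 < K" using K by (auto simp: K_def)
  have k0: "0 < k" using K by simp
  have Lp: "0 < L" using Kp delT_pos by (simp add: L_def)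
  have sp: "0 < s" using Kp by (simp add: s_def)
  have lam0: "0 < lam" by (rule lam_pos)
  have \<mu>0: "0 < \<mu>" using \<mu> lam0 by linarith
  have pk: "pmf p k = K powr (-(1+\<alpha>)) / (2 * Z)" using k0 by (simp add: pk_formula K_def)
  have pk0: "0 < pmf p k" using pk Kp Z_pos by simp
  have m1: "0 \<le> mom1" by (simp add: mom1_def mom_nonneg)
  have m2: "0 \<le> mom2" by (simp add: mom2_def mom_nonneg)
  have \<mu>1: "\<mu>^2 + \<mu> \<le> \<mu> * ((1 + 1 / lam) * a * K)"
  proof -
    have "\<mu> + 1 \<le> \<mu> * (1 + 1 / lam)" using \<mu> lam0 by (simp add: field_simps)
    also have "\<dots> \<le> (a * K) * (1 + 1 / lam)" using \<mu> lam0 by (intro mult_right_mono) (auto simp: K_def)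
    finally have "\<mu> * (\<mu> + 1) \<le> \<mu> * ((1 + 1 / lam) * a * K)" using \<mu>0 by (intro mult_left_mono) (auto simp: algebra_simps)
    then show ?thesis by (simp add: power2_eq_square algebra_simps)
  qed
  have t1: "exp (- h * real_of_int k) * exp (\<mu> * (EEh h L - 1)) \<le> \<mu> * pmf p k * (C1 a * K powr (-1))"
  proof -
    have "h * K = (2 + \<alpha>) * ln K" using Kp delT_pos delT_rho by (simp add: h_def field_simps)
    then have e1: "exp (- h * real_of_int k) = K powr (-(2+\<alpha>))" using Kp by (simp add: K_def powr_def algebra_simps)
    have "\<mu> * (EEh h L - 1) \<le> B0 a"
      unfolding EEh_def h_def L_def by (rule A2) (use Kp \<mu>0 \<mu> a in \<open>auto simp: K_def\<close>)
    then have e2: "exp (\<mu> * (EEh h L - 1)) \<le> exp (B0 a)" by simp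
    have "exp (- h * real_of_int k) * exp (\<mu> * (EEh h L - 1)) \<le> K powr (-(2+\<alpha>)) * exp (B0 a)"
      unfolding e1 using e2 by (intro mult_left_mono) auto
    also have "K powr (-(2+\<alpha>)) = K powr (-1) * K powr (-(1+\<alpha>))"
    proof -
      have e: "-(2+\<alpha>) = -1 + -(1+\<alpha>)" by simp
      show ?thesis unfolding e by (rule powr_add)
    qed
    also have "K powr (-(1+\<alpha>)) = pmf p k * (2 * Z)" using pk Z_pos by simp
    also have "K powr (-1) * (pmf p k * (2 * Z)) * exp (B0 a) \<le> \<mu> * pmf p k * (C1 a * K powr (-1))"
    proof -
      have "K powr (-1) * (pmf p k * (2 * Z)) * exp (B0 a) = lam * pmf p k * (C1 a * K powr (-1))"
        using lam0 by (simp add: C1_def field_simps)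
      also have "\<dots> \<le> \<mu> * pmf p k * (C1 a * K powr (-1))"
        using \<mu> pk0 Z_pos lam0 by (intro mult_right_mono) (auto simp: C1_def)
      finally show ?thesis .
    qed
    finally show ?thesis .
  qed
  have t2: "2 * supb L * tl L * (\<mu>^2 + \<mu>) \<le> \<mu> * pmf p k * (C2 a * K powr (- 2 * rhoT))"
  proof -
    have sb: "supb L = delT powr (-(1+\<alpha>)) * pmf p k"
    proof -
      have "supb L = (real_of_int k / L) powr (1+\<alpha>) * pmf p k" by (rule supb_eq[OF Lp k0])
      also have "real_of_int k / L = 1 / delT" using Kp delT_pos by (simp add: L_def K_def)
      also have "(1 / delT) powr (1+\<alpha>) = delT powr (-(1+\<alpha>))"
        using delT_pos by (subst powr_minus_divide) (simp add: powr_divide)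
      finally show ?thesis .
    qed
    have tb: "tl L \<le> mom2 * delT powr (- apT) * K powr (- apT)"
      using tl_le[OF Lp] delT_pos Kp by (simp add: L_def powr_mult)
    have "2 * supb L * tl L * (\<mu>^2 + \<mu>) \<le> 2 * supb L * (mom2 * delT powr (- apT) * K powr (- apT)) * (\<mu> * ((1 + 1 / lam) * a * K))"
      using tb \<mu>1 supb_nonneg[of L] tl_nonneg[of L] \<mu>0 m2
      by (intro mult_mono mult_left_mono) (auto intro!: mult_nonneg_nonneg)
    also have "\<dots> = \<mu> * pmf p k * (C2 a * (K powr (- apT) * K))"
      unfolding sb C2_def by (simp add: algebra_simps)
    also have "K powr (- apT) * K = K powr (- 2 * rhoT)"
    proof -
      have "K powr (- apT) * K = K powr (- apT) * K powr 1" using Kp by simp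
      also have "\<dots> = K powr (- apT + 1)" by (rule powr_add[symmetric])
      also have "- apT + 1 = - 2 * rhoT" using apT_rho2 by simp
      finally show ?thesis .
    qed
    finally show ?thesis .
  qed
  have t3: "Kc k L * pmf p k / (2 * real_of_int k) * (sig2 L / s * (\<mu>^2 + \<mu>) + s * \<mu>) \<le> \<mu> * pmf p k * (C3 a * K powr (- thT / 2))"
  proof -
    have kc: "Kc k L = KcC" using Kp delT_pos by (simp add: Kc_def KcC_def L_def K_def)
    have KcC0: "0 \<le> KcC" unfolding KcC_def using alpha_gt by (intro add_nonneg_nonneg) auto
    have sg: "sig2 L \<le> K powr (1 - thT) * mom1"
    proof -
      have "sig2 L \<le> L powr (1 - thT) * mom1" by (rule sig2_le[OF Lp])
      also have "L powr (1 - thT) \<le> K powr (1 - thT)"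
        using Lp delT_le thT_le Kp by (intro powr_mono2) (auto simp: L_def)
      then have "L powr (1 - thT) * mom1 \<le> K powr (1 - thT) * mom1" using m1 by (rule mult_right_mono)
      finally show ?thesis .
    qed
    have "sig2 L / s * (\<mu>^2 + \<mu>) \<le> (K powr (1 - thT) * mom1) / s * (\<mu> * ((1 + 1 / lam) * a * K))"
      using sg \<mu>1 sp sig2_nonneg[of L] \<mu>0 by (intro mult_mono divide_right_mono) (auto intro!: mult_nonneg_nonneg)
    also have "\<dots> = mom1 * (1 + 1 / lam) * a * \<mu> * (K powr (1 - thT) * K / s)" by (simp add: algebra_simps)
    also have "K powr (1 - thT) * K / s = K powr (1 - thT / 2)"
    proof -
      have "K powr (1 - thT) * K = K powr (1 - thT) * K powr 1" using Kp by simp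
      also have "\<dots> = K powr ((1 - thT) + 1)" by (rule powr_add[symmetric])
      finally have "K powr (1 - thT) * K = K powr (2 - thT)" by (simp add: algebra_simps)
      then have "K powr (1 - thT) * K / s = K powr (2 - thT) / K powr (1 - thT/2)" by (simp add: s_def)
      also have "\<dots> = K powr ((2 - thT) - (1 - thT/2))" by (rule powr_diff[symmetric])
      finally show ?thesis by (simp add: algebra_simps)
    qed
    finally have A: "sig2 L / s * (\<mu>^2 + \<mu>) + s * \<mu> \<le> \<mu> * K powr (1 - thT / 2) * (mom1 * (1 + 1 / lam) * a + 1)"
      by (simp add: s_def algebra_simps)
    have "Kc k L * pmf p k / (2 * real_of_int k) * (sig2 L / s * (\<mu>^2 + \<mu>) + s * \<mu>) \<le>
          KcC * pmf p k / (2 * K) * (\<mu> * K powr (1 - thT / 2) * (mom1 * (1 + 1 / lam) * a + 1))"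
      unfolding kc K_def[symmetric] using A KcC0 pk0 Kp by (intro mult_left_mono) auto
    also have "\<dots> = \<mu> * pmf p k * (C3 a * (K powr (1 - thT / 2) / K))"
      by (simp add: C3_def field_simps)
    also have "K powr (1 - thT / 2) / K = K powr (- thT / 2)"
    proof -
      have "K powr (1 - thT / 2) / K = K powr (1 - thT / 2) / K powr 1" using Kp by simp
      also have "\<dots> = K powr ((1 - thT / 2) - 1)" by (rule powr_diff[symmetric])
      finally show ?thesis by simp
    qed
    finally show ?thesis .
  qed
  have "CF \<mu> k L s h \<le> \<mu> * pmf p k * (C1 a * K powr (-1)) + \<mu> * pmf p k * (C2 a * K powr (- 2 * rhoT)) + \<mu> * pmf p k * (C3 a * K powr (- thT / 2))"
    unfolding CF_def using t1 t2 t3 by linarith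
  then show ?thesis by (simp add: K_def L_def s_def h_def algebra_simps)
qed

end


lemma powr_K_n:
  fixes K c n e b :: real
  assumes "c * n \<le> K" "1 \<le> n" "0 < c" "b \<le> e" "0 \<le> b"
  shows "K powr (- e) \<le> c powr (- e) * n powr (- b)"
proof -
  have cn: "0 < c * n" using assms by simp
  have "K powr (- e) \<le> (c * n) powr (- e)"
    using assms cn by (intro powr_mono2') auto
  also have "\<dots> = c powr (- e) * n powr (- e)" using assms by (simp add: powr_mult)
  also have "n powr (- e) \<le> n powr (- b)" using assms by (intro powr_mono) auto
  then have "c powr (- e) * n powr (- e) \<le> c powr (- e) * n powr (- b)" by (intro mult_left_mono) auto
  finally show ?thesis .
qed

lemma exp_minus_approx:
  fixes x :: real
  assumes "0 \<le> x" "x \<le> 1"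
  shows "\<bar>(1 - exp (- x)) - x\<bar> \<le> x^2"
proof -
  have "1 - x \<le> exp (- x)" using exp_ge_add_one_self[of "- x"] by simp
  moreover have "exp (- x) \<le> 1 + (- x) + (- x)^2" using assms by (intro exp_le_quad) auto
  ultimately show ?thesis by (simp add: abs_le_iff)
qed

context both
begin

definition betT :: real where "betT = thT / 2"

lemma final_n:
  assumes c: "0 < c"
  shows "\<exists>C n0. \<forall>(n::nat) (k::int). n0 \<le> n \<longrightarrow> c * real n \<le> real_of_int k \<longrightarrow>
     \<bar>prob {\<omega> \<in> space M. SS n \<omega> = k} - prob {\<omega> \<in> space M. ExE n k \<omega>}\<bar>
       \<le> C * real n powr (- betT) * prob {\<omega> \<in> space M. ExE n k \<omega>}"
proof -
  have lam0: "0 < lam" by (rule lam_pos)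
  define a where "a = 3 * lam / c"
  have a0: "0 \<le> a" using lam0 c by (simp add: a_def)
  define D where "D = C1 a * c powr (-1) + C2 a * c powr (- 2 * rhoT) + C3 a * c powr (- betT)"
  define C where "C = 2 * (D + a / Z * c powr (-1))"
  define K0 where "K0 = max 2 (a / Z)"
  define n0 where "n0 = nat \<lceil>K0 / c\<rceil> + 1"
  have b0: "0 < betT" using thT_pos by (simp add: betT_def)
  have b1: "betT \<le> 1" using thT_le by (simp add: betT_def)
  have b2: "betT \<le> 2 * rhoT" using thT_le_rho by (simp add: betT_def)
  show ?thesis
  proof (intro exI allI impI)
    fix n :: nat and k :: int
    assume n: "n0 \<le> n" and kc: "c * real n \<le> real_of_int k"
    define K where "K = real_of_int k"
    define \<mu> where "\<mu> = (2 * real n + 1) * lam"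
    define x where "x = \<mu> * pmf p k"
    have n1: "1 \<le> real n" using n by (simp add: n0_def)
    have "K0 / c \<le> real n" using n unfolding n0_def by linarith
    then have KK0: "K0 \<le> K" using kc c by (simp add: K_def field_simps)
    have K2: "2 \<le> K" using KK0 by (simp add: K0_def)
    have KaZ: "a / Z \<le> K" using KK0 by (simp add: K0_def)
    have k0: "0 < k" using K2 by (simp add: K_def)
    have \<mu>l: "lam \<le> \<mu>" using lam0 by (simp add: \<mu>_def)
    have \<mu>a: "\<mu> \<le> a * K"
    proof -
      have "\<mu> \<le> 3 * lam * real n" using n1 lam0 by (simp add: \<mu>_def algebra_simps)
      also have "\<dots> = a * (c * real n)" using c by (simp add: a_def)
      also have "\<dots> \<le> a * K" using kc a0 by (intro mult_left_mono) (auto simp: K_def)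
      finally show ?thesis .
    qed
    have pk: "pmf p k = K powr (-(1+\<alpha>)) / (2 * Z)" using k0 by (simp add: pk_formula K_def)
    have x0: "0 < x" using \<mu>l lam0 pk Z_pos K2 by (simp add: x_def)
    have xK: "x \<le> a / (2 * Z) * K powr (-1)"
    proof -
      have "x \<le> a * K * (K powr (-(1+\<alpha>)) / (2 * Z))"
        unfolding x_def pk using \<mu>a Z_pos by (intro mult_right_mono) auto
      also have "K * K powr (-(1+\<alpha>)) = K powr (- \<alpha>)"
      proof -
        have "K * K powr (-(1+\<alpha>)) = K powr 1 * K powr (-(1+\<alpha>))" using K2 by simp
        also have "\<dots> = K powr (1 + -(1+\<alpha>))" by (rule powr_add[symmetric])
        finally show ?thesis by simp
      qed
      then have "a * K * (K powr (-(1+\<alpha>)) / (2 * Z)) = a / (2 * Z) * K powr (- \<alpha>)" by (simp add: field_simps)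
      also have "K powr (- \<alpha>) \<le> K powr (-1)" using K2 alpha_gt by (intro powr_mono) auto
      then have "a / (2 * Z) * K powr (- \<alpha>) \<le> a / (2 * Z) * K powr (-1)" using a0 Z_pos by (intro mult_left_mono) auto
      finally show ?thesis .
    qed
    have xhalf: "x \<le> 1/2"
    proof -
      have "K powr (-1) = 1 / K" using K2 by (simp add: powr_minus_divide)
      then have "a / (2 * Z) * K powr (-1) = (a / Z) / K / 2" by simp
      also have "\<dots> \<le> 1 / 2"
      proof -
        have "(a / Z) / K \<le> 1" using KaZ K2 by (subst divide_le_eq_1_pos) auto
        then show ?thesis by (intro divide_right_mono) auto
      qed
      finally show ?thesis using xK by linarith
    qed
    have S: "\<bar>prob {\<omega> \<in> space M. SS n \<omega> = k} - x\<bar> \<le> x * (D * real n powr (- betT))"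
    proof -
      have "\<bar>prob {\<omega> \<in> space M. SS n \<omega> = k} - x\<bar> \<le> CF \<mu> k (delT * K) (K powr (1 - thT/2)) (rhoT * ln K / (delT * K))"
        unfolding x_def \<mu>_def
      proof (rule B2)
        show "0 < k" by (rule k0)
        show "0 < delT * K" using delT_pos K2 by simp
        show "2 * (delT * K) < real_of_int k" using delT_le K2 by (simp add: K_def)
        show "0 < K powr (1 - thT / 2)" using K2 by simp
        show "0 \<le> rhoT * ln K / (delT * K)" using rhoT_pos delT_pos K2 by simp
      qed
      also have "\<dots> \<le> \<mu> * pmf p k * (C1 a * K powr (-1) + C2 a * K powr (- 2 * rhoT) + C3 a * K powr (- thT / 2))"
        unfolding K_def by (rule CF_bound) (use K2 \<mu>l \<mu>a a0 in \<open>auto simp: K_def\<close>)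
      also have "C1 a * K powr (-1) + C2 a * K powr (- 2 * rhoT) + C3 a * K powr (- thT / 2) \<le> D * real n powr (- betT)"
      proof -
        have c1: "0 \<le> C1 a" using a0 lam0 Z_pos by (simp add: C1_def)
        have c2: "0 \<le> C2 a" using a0 lam0 delT_pos by (simp add: C2_def mom2_def mom_nonneg)
        have c3: "0 \<le> C3 a"
        proof -
          have "0 \<le> KcC" unfolding KcC_def using alpha_gt by (intro add_nonneg_nonneg) auto
          moreover have "0 \<le> mom1 * (1 + 1 / lam) * a + 1" using a0 lam0 by (simp add: mom1_def mom_nonneg)
          ultimately show ?thesis by (simp add: C3_def)
        qed
        have "K powr (-1) \<le> c powr (-1) * real n powr (- betT)"
          using kc n1 c b1 b0 by (intro powr_K_n) (auto simp: K_def)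
        moreover have "K powr (- (2 * rhoT)) \<le> c powr (- (2 * rhoT)) * real n powr (- betT)"
          using kc n1 c b2 b0 by (intro powr_K_n) (auto simp: K_def)
        moreover have "K powr (- betT) \<le> c powr (- betT) * real n powr (- betT)"
          using kc n1 c b0 by (intro powr_K_n) (auto simp: K_def)
        ultimately have "C1 a * K powr (-1) + C2 a * K powr (- 2 * rhoT) + C3 a * K powr (- thT / 2) \<le>
              C1 a * (c powr (-1) * real n powr (- betT)) + C2 a * (c powr (- (2 * rhoT)) * real n powr (- betT)) + C3 a * (c powr (- betT) * real n powr (- betT))"
          using c1 c2 c3 unfolding betT_def by (intro add_mono mult_left_mono) auto
        also have "\<dots> = D * real n powr (- betT)" by (simp add: D_def algebra_simps)
        finally show ?thesis .
      qed
      then have "\<mu> * pmf p k * (C1 a * K powr (-1) + C2 a * K powr (- 2 * rhoT) + C3 a * K powr (- thT / 2)) \<le> x * (D * real n powr (- betT))"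
        using x0 unfolding x_def by (intro mult_left_mono) auto
      finally show ?thesis .
    qed
    have PE: "prob {\<omega> \<in> space M. ExE n k \<omega>} = 1 - exp (- x)"
      by (simp add: prob_E x_def \<mu>_def)
    have E: "\<bar>prob {\<omega> \<in> space M. ExE n k \<omega>} - x\<bar> \<le> x * (a / Z * c powr (-1) * real n powr (- betT))"
    proof -
      have "\<bar>prob {\<omega> \<in> space M. ExE n k \<omega>} - x\<bar> \<le> x^2" unfolding PE using x0 xhalf by (intro exp_minus_approx) auto
      also have "x^2 = x * x" by (simp add: power2_eq_square)
      also have "x \<le> a / (2 * Z) * (c powr (-1) * real n powr (- betT))"
      proof -
        have "K powr (-1) \<le> c powr (-1) * real n powr (- betT)"
          using kc n1 c b1 b0 by (intro powr_K_n) (auto simp: K_def)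
        then show ?thesis using xK a0 Z_pos by (smt (verit) mult_left_mono divide_nonneg_pos)
      qed
      then have "x * x \<le> x * (a / (2 * Z) * (c powr (-1) * real n powr (- betT)))" using x0 by (intro mult_left_mono) auto
      also have "\<dots> \<le> x * (a / Z * c powr (-1) * real n powr (- betT))"
        using x0 a0 Z_pos c by (intro mult_left_mono) (auto simp: field_simps)
      finally show ?thesis .
    qed
    have PEx: "x / 2 \<le> prob {\<omega> \<in> space M. ExE n k \<omega>}"
    proof -
      have "\<bar>prob {\<omega> \<in> space M. ExE n k \<omega>} - x\<bar> \<le> x^2" unfolding PE using x0 xhalf by (intro exp_minus_approx) auto
      moreover have "x^2 \<le> x / 2" using x0 xhalf by (simp add: power2_eq_square mult_left_mono[of x "1/2" x, simplified])
      ultimately show ?thesis by (simp add: abs_le_iff)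
    qed
    have "\<bar>prob {\<omega> \<in> space M. SS n \<omega> = k} - prob {\<omega> \<in> space M. ExE n k \<omega>}\<bar> \<le>
          x * (D * real n powr (- betT)) + x * (a / Z * c powr (-1) * real n powr (- betT))"
      using S E by (simp add: abs_le_iff)
    also have "\<dots> = (x / 2) * (C * real n powr (- betT))" by (simp add: C_def algebra_simps)
    also have "\<dots> \<le> prob {\<omega> \<in> space M. ExE n k \<omega>} * (C * real n powr (- betT))"
    proof (rule mult_right_mono[OF PEx])
      have "0 \<le> D"
      proof -
        have c1: "0 \<le> C1 a" using a0 lam0 Z_pos by (simp add: C1_def)
        have c2: "0 \<le> C2 a" using a0 lam0 delT_pos by (simp add: C2_def mom2_def mom_nonneg)
        have "0 \<le> KcC" unfolding KcC_def using alpha_gt by (intro add_nonneg_nonneg) auto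
        then have c3: "0 \<le> C3 a" using a0 lam0 by (simp add: C3_def mom1_def mom_nonneg)
        show ?thesis using c1 c2 c3 c by (simp add: D_def)
      qed
      then show "0 \<le> C * real n powr (- betT)" using a0 Z_pos c by (simp add: C_def)
    qed
    finally show "\<bar>prob {\<omega> \<in> space M. SS n \<omega> = k} - prob {\<omega> \<in> space M. ExE n k \<omega>}\<bar>
       \<le> C * real n powr (- betT) * prob {\<omega> \<in> space M. ExE n k \<omega>}" by (simp add: algebra_simps)
  qed
qed

end



lemma zeta_pos:
  fixes \<alpha> :: real
  assumes "1 < \<alpha>"
  shows "0 < zeta_real (1 + \<alpha>)"
proof -
  have "summable (\<lambda>n. real n powr (-(1 + \<alpha>)))" using assms by (simp add: summable_real_powr_iff)
  then have s: "summable (\<lambda>n. real (Suc n) powr (-(1 + \<alpha>)))" by (subst summable_Suc_iff)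
  have e: "1 / real (Suc m) powr (1 + \<alpha>) = real (Suc m) powr (-(1 + \<alpha>))" for m
    by (rule powr_minus_divide[symmetric])
  show ?thesis unfolding zeta_real_def e by (rule suminf_pos[OF s]) simp
qed

theorem proposition1:
  fixes \<alpha> :: real
  assumes "\<alpha> > 1"
  shows "\<exists>\<beta>>0. \<forall>(lam::real) (M :: 'a measure) (N :: int \<Rightarrow> 'a \<Rightarrow> nat) (Y :: int \<Rightarrow> nat \<Rightarrow> 'a \<Rightarrow> int).
     lam > 0 \<longrightarrow> prob_space M \<longrightarrow>
     prob_space.indep_vars M (\<lambda>_. count_space UNIV)
        (\<lambda>j \<omega>. case j of Inl x \<Rightarrow> int (N x \<omega>) | Inr (x, i) \<Rightarrow> Y x i \<omega>)
        (range Inl \<union> {Inr (x, i) | x i. i \<ge> 1}) \<longrightarrow>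
     (\<forall>x (m::nat). measure M {\<omega> \<in> space M. N x \<omega> = m} = lam ^ m / fact m * exp (- lam)) \<longrightarrow>
     (\<forall>x i (k::int). i \<ge> 1 \<longrightarrow> measure M {\<omega> \<in> space M. Y x i \<omega> = k} =
        (if k = 0 then 0 else \<bar>real_of_int k\<bar> powr (-(1 + \<alpha>)) / (2 * zeta_real (1 + \<alpha>)))) \<longrightarrow>
     (\<forall>c>0. \<exists>C n0. \<forall>(n::nat) (k::int). n \<ge> n0 \<longrightarrow> real_of_int k \<ge> c * real n \<longrightarrow>
        \<bar>measure M {\<omega> \<in> space M. (\<Sum>x\<in>{- int n..int n}. \<Sum>i\<in>{1..N x \<omega>}. Y x i \<omega>) = k}
          - measure M {\<omega> \<in> space M. \<exists>x\<in>{- int n..int n}. \<exists>i\<in>{1..N x \<omega>}. Y x i \<omega> = k}\<bar>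
        \<le> C * real n powr (- \<beta>) *
          measure M {\<omega> \<in> space M. \<exists>x\<in>{- int n..int n}. \<exists>i\<in>{1..N x \<omega>}. Y x i \<omega> = k})"
proof -
  define Z where "Z = zeta_real (1 + \<alpha>)"
  have Z0: "0 < Z" unfolding Z_def by (rule zeta_pos[OF assms])
  define f where "f = (\<lambda>j::int. if j = 0 then 0 else \<bar>real_of_int j\<bar> powr (-(1 + \<alpha>)) / (2 * Z))"
  have f0: "0 \<le> f j" for j using Z0 by (simp add: f_def)
  define \<beta> where "\<beta> = min (\<alpha> - 1) 1 / 2 / 2"
  have \<beta>0: "0 < \<beta>" using assms by (simp add: \<beta>_def)
  show ?thesis
  proof (rule exI[of _ \<beta>], intro conjI \<beta>0 allI impI)
    fix lam :: real and M :: "'a measure" and N :: "int \<Rightarrow> 'a \<Rightarrow> nat" and Y :: "int \<Rightarrow> nat \<Rightarrow> 'a \<Rightarrow> int" and c :: real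
    assume lam: "0 < lam" and ps: "prob_space M"
      and ind: "prob_space.indep_vars M (\<lambda>_. count_space UNIV)
        (\<lambda>j \<omega>. case j of Inl x \<Rightarrow> int (N x \<omega>) | Inr (x, i) \<Rightarrow> Y x i \<omega>)
        (range Inl \<union> {Inr (x, i) | x i. i \<ge> 1})"
      and pois: "\<forall>x (m::nat). measure M {\<omega> \<in> space M. N x \<omega> = m} = lam ^ m / fact m * exp (- lam)"
      and yd: "\<forall>x i (k::int). i \<ge> 1 \<longrightarrow> measure M {\<omega> \<in> space M. Y x i \<omega> = k} =
        (if k = 0 then 0 else \<bar>real_of_int k\<bar> powr (-(1 + \<alpha>)) / (2 * zeta_real (1 + \<alpha>)))"
      and c: "0 < c"
    interpret ps: prob_space M by (rule ps)
    have XXeq: "(\<lambda>j \<omega>. case j of Inl x \<Rightarrow> int (N x \<omega>) | Inr (x, i) \<Rightarrow> Y x i \<omega>) = XX N Y"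
      by (simp add: fun_eq_iff XX_def)
    have ind': "ps.indep_vars (\<lambda>_. count_space UNIV) (XX N Y) Idx"
      using ind unfolding XXeq Idx_def .
    have ymeas: "Y 0 1 \<in> measurable M (count_space UNIV)"
    proof -
      have "XX N Y (Inr (0, 1)) \<in> measurable M (count_space UNIV)"
        using ind' by (auto simp: ps.indep_vars_def Idx_def)
      moreover have "XX N Y (Inr (0, 1)) = Y 0 1" by (simp add: XX_def fun_eq_iff)
      ultimately show ?thesis by simp
    qed
    have yf: "measure M {\<omega> \<in> space M. Y x i \<omega> = k} = f k" if "1 \<le> i" for x i k
      using yd that by (simp add: f_def Z_def)
    have fsum: "(\<integral>\<^sup>+j. ennreal (f j) \<partial>count_space UNIV) = 1"
    proof -
      have "(\<integral>\<^sup>+j. ennreal (f j) \<partial>count_space UNIV) = (\<integral>\<^sup>+j. emeasure M {\<omega> \<in> space M. Y 0 1 \<omega> = j} \<partial>count_space UNIV)"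
        by (intro nn_integral_cong) (simp add: ps.emeasure_eq_measure yf)
      also have "\<dots> = emeasure M (\<Union>j\<in>UNIV. {\<omega> \<in> space M. Y 0 1 \<omega> = j})"
        by (rule emeasure_UN_countable[symmetric]) (use ymeas in \<open>auto simp: disjoint_family_on_def\<close>)
      also have "(\<Union>j\<in>UNIV. {\<omega> \<in> space M. Y 0 1 \<omega> = j}) = space M" by auto
      finally show ?thesis by (simp add: ps.emeasure_space_1)
    qed
    define p where "p = embed_pmf f"
    have pmfp: "pmf p j = f j" for j unfolding p_def by (rule pmf_embed_pmf[OF f0 fsum])
    have hv: "heavy p \<alpha> Z"
      by (rule heavy.intro) (use assms Z0 in \<open>auto simp: pmfp f_def\<close>)
    have md: "model M N Y lam p"
    proof (rule model.intro[OF ps], rule model_axioms.intro)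
      show "0 < lam" by (rule lam)
      show "ps.indep_vars (\<lambda>_. count_space UNIV) (XX N Y) Idx" by (rule ind')
      show "\<And>x m. measure M {\<omega> \<in> space M. N x \<omega> = m} = lam ^ m / fact m * exp (- lam)" using pois by auto
      show "\<And>x i k. 1 \<le> i \<Longrightarrow> measure M {\<omega> \<in> space M. Y x i \<omega> = k} = pmf p k" by (simp add: yf pmfp)
    qed
    interpret B: both M N Y lam p \<alpha> Z
      using md hv by (simp add: both_def)
    have betaeq: "B.betT = \<beta>" by (simp add: B.betT_def B.thT_def \<beta>_def)
    have SSeq: "B.SS n \<omega> = (\<Sum>x\<in>{- int n..int n}. \<Sum>i\<in>{1..N x \<omega>}. Y x i \<omega>)" for n \<omega>
      by (simp add: B.SS_def B.FF_def)
    have EEeq: "B.ExE n k \<omega> = (\<exists>x\<in>{- int n..int n}. \<exists>i\<in>{1..N x \<omega>}. Y x i \<omega> = k)" for n k \<omega>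
      by (simp add: B.ExE_def B.FF_def)
    show "\<exists>C n0. \<forall>(n::nat) (k::int). n \<ge> n0 \<longrightarrow> real_of_int k \<ge> c * real n \<longrightarrow>
        \<bar>measure M {\<omega> \<in> space M. (\<Sum>x\<in>{- int n..int n}. \<Sum>i\<in>{1..N x \<omega>}. Y x i \<omega>) = k}
          - measure M {\<omega> \<in> space M. \<exists>x\<in>{- int n..int n}. \<exists>i\<in>{1..N x \<omega>}. Y x i \<omega> = k}\<bar>
        \<le> C * real n powr (- \<beta>) *
          measure M {\<omega> \<in> space M. \<exists>x\<in>{- int n..int n}. \<exists>i\<in>{1..N x \<omega>}. Y x i \<omega> = k}"
    proof -
      obtain C n0 where H: "\<forall>(n::nat) (k::int). n0 \<le> n \<longrightarrow> c * real n \<le> real_of_int k \<longrightarrow>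
        \<bar>measure M {\<omega> \<in> space M. B.SS n \<omega> = k} - measure M {\<omega> \<in> space M. B.ExE n k \<omega>}\<bar>
          \<le> C * real n powr (- B.betT) * measure M {\<omega> \<in> space M. B.ExE n k \<omega>}"
        using B.final_n[OF c] by blast
      show ?thesis
      proof (intro exI[of _ C] exI[of _ n0] allI impI)
        fix n :: nat and k :: int assume "n0 \<le> n" "c * real n \<le> real_of_int k"
        then show "\<bar>measure M {\<omega> \<in> space M. (\<Sum>x\<in>{- int n..int n}. \<Sum>i\<in>{1..N x \<omega>}. Y x i \<omega>) = k}
          - measure M {\<omega> \<in> space M. \<exists>x\<in>{- int n..int n}. \<exists>i\<in>{1..N x \<omega>}. Y x i \<omega> = k}\<bar>
        \<le> C * real n powr (- \<beta>) *
          measure M {\<omega> \<in> space M. \<exists>x\<in>{- int n..int n}. \<exists>i\<in>{1..N x \<omega>}. Y x i \<omega> = k}"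
          using H by (simp add: SSeq EEeq betaeq)
      qed
    qed
  qed
qed


end
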